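(* Let $\Lambda=K\mathcal{Q}/I$ be a finite-dimensional algebra over a field $K$ as in the context, let $A\geqslant 1$, and let $\tilde{\Lambda}=\tilde{\Lambda}_A$ be its stretched algebra. Let $\varepsilon=\sum_{v\in\mathcal{Q}_0}v\in\tilde{\Lambda}$. Then $\langle\varepsilon\rangle=\tilde{\Lambda}\varepsilon\tilde{\Lambda}$ is a stratifying ideal of $\tilde{\Lambda}$.
   Context: Conventions: $\mathcal{Q}$ is a finite quiver with vertex set $\mathcal{Q}_0$; $\mathfrak{o}(\alpha)$, $\mathfrak{t}(\alpha)$ denote start and end of an arrow; paths are written left to right. An element $x\in K\mathcal{Q}$ is uniform if $x=vx=xv'$ for vertices $v,v'$. $\Lambda=K\mathcal{Q}/I$ is finite-dimensional with $I$ an admissible ideal generated by a minimal set $\{g^2_1,\dots,g^2_m\}$ of uniform elements. Stretched algebra: for $A\geqslant1$, the quiver $\tilde{\mathcal{Q}}_A$ has all vertices of $\mathcal{Q}$ plus, for each arrow $\alpha$ of $\mathcal{Q}$, new vertices $w_1,\dots,w_{A-1}$; each arrow $\alpha$ is replaced by arrows $\alpha_1,\dots,\alpha_A$ with $\mathfrak{o}(\alpha_1)=\mathfrak{o}(\alpha)$, $\mathfrak{t}(\alpha_j)=\mathfrak{o}(\alpha_{j+1})=w_j$ ($1\le j\le A-1$), $\mathfrak{t}(\alpha_A)=\mathfrak{t}(\alpha)$, and the only arrows incident with $w_j$ are $\alpha_j,\alpha_{j+1}$. $\theta^*:K\mathcal{Q}\to K\tilde{\mathcal{Q}}_A$ is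 the algebra homomorphism fixing vertices and sending $\alpha\mapsto\alpha_1\cdots\alpha_A$; $\tilde{I}_A$ is the ideal generated by $\theta^*(g^2_1),\dots,\theta^*(g^2_m)$; $\tilde{\Lambda}_A=K\tilde{\mathcal{Q}}_A/\tilde{I}_A$. For a finite-dimensional algebra $B$ and idempotent $e$, the ideal $\langle e\rangle=BeB$ is stratifying if (1) the multiplication map $Be\otimes_{eBe}eB\to BeB$ is an isomorphism and (2) $\mathrm{Tor}^{eBe}_n(Be,eB)=0$ for all $n>0$. *)

theory Defs
  imports Main
begin

text \<open>Elements of K-vector spaces are modelled as functions into the field 'k.
  lspan X is the K-linear span of X (finite linear combinations).\<close>

definition lspan :: "('x \<Rightarrow> 'k::field) set \<Rightarrow> ('x \<Rightarrow> 'k) set" where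
  "lspan X = {f. \<exists>F c. finite F \<and> F \<subseteq> X \<and> f = (\<lambda>u. \<Sum>g\<in>F. c g * g u)}"

definition delta :: "'x \<Rightarrow> 'x \<Rightarrow> 'k::field" where
  "delta t = (\<lambda>u. if u = t then 1 else 0)"

definition lin :: "'k::field \<Rightarrow> ('p \<Rightarrow> 'k) \<Rightarrow> 'k \<Rightarrow> ('p \<Rightarrow> 'k) \<Rightarrow> ('p \<Rightarrow> 'k)" where
  "lin a x b y = (\<lambda>p. a * x p + b * y p)"

text \<open>Given subspaces Ss!0,...,Ss!m of an algebra R (elements are functions 'p => 'k)
  and an ideal J, the tensor product over K of the spaces (Ss!i + J)/J is the free
  vector space on tuples xs in listset Ss modulo the span of tens_rels Ss J
  (multilinearity relations and tuples having an entry in J).\<close>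

definition tens_gens :: "('p \<Rightarrow> 'k::field) set list \<Rightarrow> (('p \<Rightarrow> 'k) list \<Rightarrow> 'k) set" where
  "tens_gens Ss = delta ` listset Ss"

definition tens_rels ::
  "('p \<Rightarrow> 'k::field) set list \<Rightarrow> ('p \<Rightarrow> 'k) set \<Rightarrow> (('p \<Rightarrow> 'k) list \<Rightarrow> 'k) set" where
  "tens_rels Ss J =
     {(\<lambda>u. delta (xs[i := lin a x b y]) u - a * delta (xs[i := x]) u - b * delta (xs[i := y]) u)
       | xs i a b x y. xs \<in> listset Ss \<and> i < length Ss \<and> x \<in> Ss ! i \<and> y \<in> Ss ! i}
   \<union> {delta xs | xs i. xs \<in> listset Ss \<and> i < length xs \<and> xs ! i \<in> J}"

definition mu_map :: "(('p \<Rightarrow> 'k) \<Rightarrow> ('p \<Rightarrow> 'k) \<Rightarrow> ('p \<Rightarrow> 'k))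
    \<Rightarrow> (('p \<Rightarrow> 'k::field) list \<Rightarrow> 'k) \<Rightarrow> ('p \<Rightarrow> 'k)" where
  "mu_map mul z = (\<lambda>p. \<Sum>t\<in>{t. z t \<noteq> 0}. z t * mul (t ! 0) (t ! 1) p)"

definition bar_d :: "(('p \<Rightarrow> 'k) \<Rightarrow> ('p \<Rightarrow> 'k) \<Rightarrow> ('p \<Rightarrow> 'k))
    \<Rightarrow> (('p \<Rightarrow> 'k::field) list \<Rightarrow> 'k) \<Rightarrow> (('p \<Rightarrow> 'k) list \<Rightarrow> 'k)" where
  "bar_d mul z = (\<lambda>u. \<Sum>t\<in>{t. z t \<noteq> 0}. z t *
      (\<Sum>i<length t - 1. (-1) ^ i *
          delta (take i t @ [mul (t ! i) (t ! Suc i)] @ drop (Suc (Suc i)) t) u))"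

text \<open>B = R/J, where R is a K-algebra (carrier of functions 'p => 'k, with multiplication
  mul) and J an ideal; e an idempotent. Representatives: Be ~ {x e}, eBe ~ {e x e},
  eB ~ {e x}. Tor^{eBe}_n(Be,eB) is computed as the homology of the (unnormalised)
  bar complex Be (x)_K (eBe)^{(x) n} (x)_K eB, which is valid since K is a field.\<close>

definition left_mod :: "('p \<Rightarrow> 'k) set \<Rightarrow> (('p \<Rightarrow> 'k) \<Rightarrow> ('p \<Rightarrow> 'k) \<Rightarrow> ('p \<Rightarrow> 'k))
    \<Rightarrow> ('p \<Rightarrow> 'k) \<Rightarrow> ('p \<Rightarrow> 'k) set" where
  "left_mod R mul e = {mul x e | x. x \<in> R}"

definition corner :: "('p \<Rightarrow> 'k) set \<Rightarrow> (('p \<Rightarrow> 'k) \<Rightarrow> ('p \<Rightarrow> 'k) \<Rightarrow> ('p \<Rightarrow> 'k))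
    \<Rightarrow> ('p \<Rightarrow> 'k) \<Rightarrow> ('p \<Rightarrow> 'k) set" where
  "corner R mul e = {mul (mul e x) e | x. x \<in> R}"

definition right_mod :: "('p \<Rightarrow> 'k) set \<Rightarrow> (('p \<Rightarrow> 'k) \<Rightarrow> ('p \<Rightarrow> 'k) \<Rightarrow> ('p \<Rightarrow> 'k))
    \<Rightarrow> ('p \<Rightarrow> 'k) \<Rightarrow> ('p \<Rightarrow> 'k) set" where
  "right_mod R mul e = {mul e x | x. x \<in> R}"

definition bar_mods :: "('p \<Rightarrow> 'k) set \<Rightarrow> (('p \<Rightarrow> 'k) \<Rightarrow> ('p \<Rightarrow> 'k) \<Rightarrow> ('p \<Rightarrow> 'k))
    \<Rightarrow> ('p \<Rightarrow> 'k) \<Rightarrow> nat \<Rightarrow> ('p \<Rightarrow> 'k) set list" where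
  "bar_mods R mul e n = [left_mod R mul e] @ replicate n (corner R mul e) @ [right_mod R mul e]"

definition balanced_rels :: "('p \<Rightarrow> 'k::field) set \<Rightarrow> (('p \<Rightarrow> 'k) \<Rightarrow> ('p \<Rightarrow> 'k) \<Rightarrow> ('p \<Rightarrow> 'k))
    \<Rightarrow> ('p \<Rightarrow> 'k) \<Rightarrow> (('p \<Rightarrow> 'k) list \<Rightarrow> 'k) set" where
  "balanced_rels R mul e =
     {(\<lambda>u. delta [mul m c, n] u - delta [m, mul c n] u) | m c n.
        m \<in> left_mod R mul e \<and> c \<in> corner R mul e \<and> n \<in> right_mod R mul e}"

definition stratifying :: "('p \<Rightarrow> 'k::field) set \<Rightarrow> (('p \<Rightarrow> 'k) \<Rightarrow> ('p \<Rightarrow> 'k) \<Rightarrow> ('p \<Rightarrow> 'k))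
    \<Rightarrow> ('p \<Rightarrow> 'k) set \<Rightarrow> ('p \<Rightarrow> 'k) \<Rightarrow> bool" where
  "stratifying R mul J e \<longleftrightarrow>
     \<comment> \<open>(1a) Be (x)_{eBe} eB -> BeB is surjective\<close>
     (\<forall>y \<in> lspan {mul (mul x e) x' | x x'. x \<in> R \<and> x' \<in> R}.
        \<exists>z \<in> lspan (tens_gens (bar_mods R mul e 0)). (\<lambda>p. mu_map mul z p - y p) \<in> J) \<and>
     \<comment> \<open>(1b) ... and injective\<close>
     (\<forall>z \<in> lspan (tens_gens (bar_mods R mul e 0)).
        mu_map mul z \<in> J \<longrightarrow>
        z \<in> lspan (tens_rels (bar_mods R mul e 0) J \<union> balanced_rels R mul e)) \<and>
     \<comment> \<open>(2) Tor_n^{eBe}(Be, eB) = 0 for n > 0 (bar complex homology)\<close>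
     (\<forall>n\<ge>1. \<forall>z \<in> lspan (tens_gens (bar_mods R mul e n)).
        bar_d mul z \<in> lspan (tens_rels (bar_mods R mul e (n - 1)) J) \<longrightarrow>
        z \<in> lspan (bar_d mul ` tens_gens (bar_mods R mul e (Suc n))
                   \<union> tens_rels (bar_mods R mul e n) J))"

record ('v, 'a) quiver =
  verts :: "'v set"
  arrs :: "'a set"
  src :: "'a \<Rightarrow> 'v"
  tgt :: "'a \<Rightarrow> 'v"

definition finite_quiver :: "('v, 'a) quiver \<Rightarrow> bool" where
  "finite_quiver Q \<longleftrightarrow> finite (verts Q) \<and> finite (arrs Q) \<and>
     (\<forall>\<alpha>\<in>arrs Q. src Q \<alpha> \<in> verts Q \<and> tgt Q \<alpha> \<in> verts Q)"

text \<open>A path is (start vertex, list of arrows), composed left to right; (v, []) is the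
  trivial path at v.\<close>
definition valid_path :: "('v, 'a) quiver \<Rightarrow> 'v \<times> 'a list \<Rightarrow> bool" where
  "valid_path Q p \<longleftrightarrow> (case p of (v, xs) \<Rightarrow>
     v \<in> verts Q \<and> set xs \<subseteq> arrs Q \<and> (xs \<noteq> [] \<longrightarrow> src Q (hd xs) = v) \<and>
     (\<forall>i. Suc i < length xs \<longrightarrow> tgt Q (xs ! i) = src Q (xs ! Suc i)))"

definition path_end :: "('v, 'a) quiver \<Rightarrow> 'v \<times> 'a list \<Rightarrow> 'v" where
  "path_end Q p = (case p of (v, xs) \<Rightarrow> if xs = [] then v else tgt Q (last xs))"

definition path_alg :: "('v, 'a) quiver \<Rightarrow> ('v \<times> 'a list \<Rightarrow> 'k::field) set" where
  "path_alg Q = {f. finite {p. f p \<noteq> 0} \<and> (\<forall>p. f p \<noteq> 0 \<longrightarrow> valid_path Q p)}"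

text \<open>Multiplication in KQ: product of paths is concatenation if composable, else 0.\<close>
definition pmul :: "('v, 'a) quiver \<Rightarrow> ('v \<times> 'a list \<Rightarrow> 'k::field)
    \<Rightarrow> ('v \<times> 'a list \<Rightarrow> 'k) \<Rightarrow> ('v \<times> 'a list \<Rightarrow> 'k)" where
  "pmul Q f g = (\<lambda>(v, zs). \<Sum>i\<le>length zs.
      f (v, take i zs) * g (path_end Q (v, take i zs), drop i zs))"

definition vtx :: "'v \<Rightarrow> ('v \<times> 'a list \<Rightarrow> 'k::field)" where
  "vtx v = delta (v, [])"

definition gen_ideal :: "('v, 'a) quiver \<Rightarrow> ('v \<times> 'a list \<Rightarrow> 'k::field) set
    \<Rightarrow> ('v \<times> 'a list \<Rightarrow> 'k) set" where
  "gen_ideal Q G = lspan {pmul Q (pmul Q x g) y | x g y.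
      x \<in> path_alg Q \<and> g \<in> G \<and> y \<in> path_alg Q}"

definition arrow_pow :: "('v, 'a) quiver \<Rightarrow> nat \<Rightarrow> ('v \<times> 'a list \<Rightarrow> 'k::field) set" where
  "arrow_pow Q k = lspan {delta p | p. valid_path Q p \<and> length (snd p) \<ge> k}"

definition admissible :: "('v, 'a) quiver \<Rightarrow> ('v \<times> 'a list \<Rightarrow> 'k::field) set \<Rightarrow> bool" where
  "admissible Q I \<longleftrightarrow> (\<exists>m\<ge>2. arrow_pow Q m \<subseteq> I \<and> I \<subseteq> arrow_pow Q 2)"

definition uniform :: "('v, 'a) quiver \<Rightarrow> ('v \<times> 'a list \<Rightarrow> 'k::field) \<Rightarrow> bool" where
  "uniform Q x \<longleftrightarrow> (\<exists>v\<in>verts Q. \<exists>v'\<in>verts Q. x = pmul Q (vtx v) x \<and> x = pmul Q x (vtx v'))"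

text \<open>New vertex w_j of arrow alpha is Inr (alpha, j), 1 <= j <= A-1; arrow alpha_j is (alpha, j).\<close>
definition stretch_quiver :: "nat \<Rightarrow> ('v, 'a) quiver \<Rightarrow> ('v + 'a \<times> nat, 'a \<times> nat) quiver" where
  "stretch_quiver A Q =
     \<lparr> verts = Inl ` verts Q \<union> {Inr (\<alpha>, j) | \<alpha> j. \<alpha> \<in> arrs Q \<and> 1 \<le> j \<and> j \<le> A - 1},
       arrs = {(\<alpha>, j) | \<alpha> j. \<alpha> \<in> arrs Q \<and> 1 \<le> j \<and> j \<le> A},
       src = (\<lambda>(\<alpha>, j). if j = 1 then Inl (src Q \<alpha>) else Inr (\<alpha>, j - 1)),
       tgt = (\<lambda>(\<alpha>, j). if j = A then Inl (tgt Q \<alpha>) else Inr (\<alpha>, j)) \<rparr>"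

definition stretch_path :: "nat \<Rightarrow> 'v \<times> 'a list \<Rightarrow> ('v + 'a \<times> nat) \<times> ('a \<times> nat) list" where
  "stretch_path A p = (case p of (v, xs) \<Rightarrow>
     (Inl v, concat (map (\<lambda>\<alpha>. map (\<lambda>j. (\<alpha>, j)) [1..<Suc A]) xs)))"

text \<open>theta*: the linear extension of the path map, i.e. the algebra homomorphism fixing
  vertices and sending alpha to alpha_1 ... alpha_A.\<close>
definition theta :: "nat \<Rightarrow> ('v \<times> 'a list \<Rightarrow> 'k::field)
    \<Rightarrow> (('v + 'a \<times> nat) \<times> ('a \<times> nat) list \<Rightarrow> 'k)" where
  "theta A f = (\<lambda>q. \<Sum>p\<in>{p. f p \<noteq> 0 \<and> stretch_path A p = q}. f p)"

end

theory Submission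
  imports Defs HOL.Modules "HOL-Library.Function_Algebras"
begin


definition sc :: "'k::field \<Rightarrow> ('x \<Rightarrow> 'k) \<Rightarrow> ('x \<Rightarrow> 'k)" where
  "sc c f = (\<lambda>u. c * f u)"

interpretation fm: module "sc :: 'k::field \<Rightarrow> ('x \<Rightarrow> 'k) \<Rightarrow> ('x \<Rightarrow> 'k)"
  by standard (auto simp: sc_def fun_eq_iff algebra_simps)

lemma sum_fun_app: "(\<Sum>a\<in>T. f a) x = (\<Sum>a\<in>T. f a x)"
  by (induct T rule: infinite_finite_induct) auto

lemma lspan_eq: "lspan X = fm.span X"
  unfolding lspan_def fm.span_explicit
  by (auto simp: fun_eq_iff sum_fun_app sc_def)

lemma lin_eq: "lin a x b y = sc a x + sc b y"
  by (auto simp: lin_def sc_def fun_eq_iff)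



definition fsupp :: "('x \<Rightarrow> 'k::field) \<Rightarrow> bool" where
  "fsupp z \<longleftrightarrow> finite {t. z t \<noteq> 0}"

definition ext :: "('x \<Rightarrow> 'y \<Rightarrow> 'k::field) \<Rightarrow> ('x \<Rightarrow> 'k) \<Rightarrow> ('y \<Rightarrow> 'k)" where
  "ext \<phi> z = (\<lambda>u. \<Sum>t\<in>{t. z t \<noteq> 0}. z t * \<phi> t u)"

lemma ext_eq: "finite S \<Longrightarrow> {t. z t \<noteq> 0} \<subseteq> S \<Longrightarrow> ext \<phi> z = (\<lambda>u. \<Sum>t\<in>S. z t * \<phi> t u)"
  unfolding ext_def by (auto simp: fun_eq_iff intro!: sum.mono_neutral_left)

lemma fsupp_add: "fsupp f \<Longrightarrow> fsupp g \<Longrightarrow> fsupp (f + g)"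
  unfolding fsupp_def by (rule finite_subset[of _ "{t. f t \<noteq> 0} \<union> {t. g t \<noteq> 0}"]) auto

lemma fsupp_sc: "fsupp f \<Longrightarrow> fsupp (sc c f)"
  unfolding fsupp_def sc_def by (rule finite_subset[of _ "{t. f t \<noteq> 0}"]) auto

lemma fsupp_zero: "fsupp 0"
  unfolding fsupp_def by auto

lemma fsupp_diff: "fsupp f \<Longrightarrow> fsupp g \<Longrightarrow> fsupp (f - g)"
  unfolding fsupp_def by (rule finite_subset[of _ "{t. f t \<noteq> 0} \<union> {t. g t \<noteq> 0}"]) auto

lemma fsupp_sum: "(\<And>a. a \<in> T \<Longrightarrow> fsupp (f a)) \<Longrightarrow> fsupp (\<Sum>a\<in>T. f a)"
  by (induct T rule: infinite_finite_induct) (auto simp: fsupp_zero fsupp_add)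

lemma fsupp_delta: "fsupp (delta t)"
  unfolding fsupp_def delta_def by auto

lemma ext_add: "fsupp f \<Longrightarrow> fsupp g \<Longrightarrow> ext \<phi> (f + g) = ext \<phi> f + ext \<phi> g"
proof -
  assume f: "fsupp f" and g: "fsupp g"
  let ?S = "{t. f t \<noteq> 0} \<union> {t. g t \<noteq> 0}"
  have fin: "finite ?S" using f g unfolding fsupp_def by auto
  have "ext \<phi> (f + g) = (\<lambda>u. \<Sum>t\<in>?S. (f + g) t * \<phi> t u)" by (rule ext_eq[OF fin]) auto
  moreover have "ext \<phi> f = (\<lambda>u. \<Sum>t\<in>?S. f t * \<phi> t u)" by (rule ext_eq[OF fin]) auto
  moreover have "ext \<phi> g = (\<lambda>u. \<Sum>t\<in>?S. g t * \<phi> t u)" by (rule ext_eq[OF fin]) auto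
  ultimately show ?thesis by (simp add: fun_eq_iff sum.distrib algebra_simps)
qed

lemma ext_zero: "ext \<phi> 0 = 0"
  unfolding ext_def by (auto simp: fun_eq_iff)

lemma ext_zero': "ext \<phi> (\<lambda>a. 0) = (\<lambda>a. 0)"
  unfolding ext_def by (auto simp: fun_eq_iff)

lemma ext_sc: "ext \<phi> (sc c f) = sc c (ext \<phi> f)"
proof (cases "c = 0")
  case True then show ?thesis by (simp add: sc_def ext_def fun_eq_iff)
next
  case False
  then have "{t. sc c f t \<noteq> 0} = {t. f t \<noteq> 0}" by (auto simp: sc_def)
  then show ?thesis unfolding ext_def by (simp add: sc_def sum_distrib_left mult.assoc fun_eq_iff)
qed

lemma ext_sum: "(\<And>a. a \<in> T \<Longrightarrow> fsupp (f a)) \<Longrightarrow> ext \<phi> (\<Sum>a\<in>T. f a) = (\<Sum>a\<in>T. ext \<phi> (f a))"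
proof (induct T rule: infinite_finite_induct)
  case (infinite A) then show ?case by (simp add: ext_zero')
next
  case empty then show ?case by (simp add: ext_zero')
next
  case (insert x F)
  have "ext \<phi> (f x + sum f F) = ext \<phi> (f x) + ext \<phi> (sum f F)"
    using insert by (intro ext_add) (auto intro!: fsupp_sum)
  moreover have "ext \<phi> (sum f F) = (\<Sum>a\<in>F. ext \<phi> (f a))" using insert by auto
  moreover have "sum f (insert x F) = f x + sum f F" using insert by (intro sum.insert)
  moreover have "(\<Sum>a\<in>insert x F. ext \<phi> (f a)) = ext \<phi> (f x) + (\<Sum>a\<in>F. ext \<phi> (f a))"
    using insert by (intro sum.insert)
  ultimately show ?case by metis
qed

lemma ext_delta:
  fixes t :: 'x and \<phi> :: "'x \<Rightarrow> 'y \<Rightarrow> 'k::field"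
  shows "ext \<phi> (delta t) = \<phi> t"
proof -
  have "{s. delta t s \<noteq> (0::'k)} = {t}" by (auto simp: delta_def)
  then show ?thesis unfolding ext_def by (simp add: delta_def)
qed

lemma ext_diff: "fsupp f \<Longrightarrow> fsupp g \<Longrightarrow> ext \<phi> (f - g) = ext \<phi> f - ext \<phi> g"
proof -
  assume f: "fsupp f" and g: "fsupp g"
  have e: "f - g = f + sc (-1) g" by (auto simp: sc_def fun_eq_iff)
  have "ext \<phi> (f - g) = ext \<phi> f + ext \<phi> (sc (-1) g)"
    unfolding e by (rule ext_add[OF f fsupp_sc[OF g]])
  also have "\<dots> = ext \<phi> f - ext \<phi> g" unfolding ext_sc by (simp add: sc_def fun_eq_iff)
  finally show ?thesis .
qed

lemma fsupp_expand: "fsupp z \<Longrightarrow> z = (\<Sum>t\<in>{t. z t \<noteq> 0}. sc (z t) (delta t))"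
  unfolding fsupp_def
  by (auto simp: fun_eq_iff sum_fun_app sc_def delta_def if_distrib sum.delta cong: if_cong)

lemma span_fsupp:
  assumes "(\<And>x. x \<in> X \<Longrightarrow> fsupp x)" "z \<in> fm.span X" shows "fsupp z"
proof -
  from assms(2) obtain T r where T: "finite T" "T \<subseteq> X" and zz: "z = (\<Sum>a\<in>T. sc (r a) a)"
    unfolding fm.span_explicit by auto
  show ?thesis unfolding zz using T assms(1) by (auto intro!: fsupp_sum fsupp_sc)
qed

lemma span_delta_iff: "z \<in> fm.span (delta ` S) \<longleftrightarrow> fsupp z \<and> {t. z t \<noteq> 0} \<subseteq> S"
proof
  assume z: "z \<in> fm.span (delta ` S)"
  have fz: "fsupp z"
    apply (rule span_fsupp[of "delta ` S"])
    using fsupp_delta z by auto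
  from z obtain T r where T: "finite T" "T \<subseteq> delta ` S" and zz: "z = (\<Sum>a\<in>T. sc (r a) a)"
    unfolding fm.span_explicit by auto
  have "{t. z t \<noteq> 0} \<subseteq> S"
  proof
    fix t assume "t \<in> {t. z t \<noteq> 0}"
    then have "(\<Sum>a\<in>T. sc (r a) a t) \<noteq> 0" using zz by (simp add: sum_fun_app)
    then obtain a where "a \<in> T" "a t \<noteq> 0" by (metis (mono_tags, lifting) mult_zero_right sc_def sum.neutral)
    then show "t \<in> S" using T by (auto simp: delta_def split: if_splits)
  qed
  then show "fsupp z \<and> {t. z t \<noteq> 0} \<subseteq> S" using fz by auto
next
  assume "fsupp z \<and> {t. z t \<noteq> 0} \<subseteq> S"
  then have "(\<Sum>t\<in>{t. z t \<noteq> 0}. sc (z t) (delta t)) \<in> fm.span (delta ` S)"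
    by (intro fm.span_sum fm.span_scale fm.span_base) auto
  then show "z \<in> fm.span (delta ` S)"
    using fsupp_expand[of z] \<open>fsupp z \<and> _\<close> by simp
qed

lemma ext_span_delta:
  assumes "z \<in> fm.span (delta ` S)" and "\<And>t. t \<in> S \<Longrightarrow> \<phi> t \<in> fm.span Y"
  shows "ext \<phi> z \<in> fm.span Y"
proof -
  have "ext \<phi> z = (\<Sum>t\<in>{t. z t \<noteq> 0}. sc (z t) (\<phi> t))"
    unfolding ext_def by (auto simp: fun_eq_iff sum_fun_app sc_def)
  then show ?thesis using assms span_delta_iff[of z S] by (auto intro!: fm.span_sum fm.span_scale)
qed

lemma ext_span_map:
  assumes "z \<in> fm.span X" and "\<And>x. x \<in> X \<Longrightarrow> fsupp x \<and> ext \<phi> x \<in> fm.span Y"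
  shows "ext \<phi> z \<in> fm.span Y"
proof -
  from assms(1) obtain T r where T: "finite T" "T \<subseteq> X" and zz: "z = (\<Sum>a\<in>T. sc (r a) a)"
    unfolding fm.span_explicit by auto
  have "ext \<phi> z = (\<Sum>a\<in>T. sc (r a) (ext \<phi> a))"
    unfolding zz using T assms(2) by (subst ext_sum) (auto intro: fsupp_sc simp: ext_sc)
  then show ?thesis using T assms(2) by (auto intro!: fm.span_sum fm.span_scale)
qed

lemma listset_iff: "xs \<in> listset Ss \<longleftrightarrow> list_all2 (\<in>) xs Ss"
proof (induct Ss arbitrary: xs)
  case Nil then show ?case by auto
next
  case (Cons S Ss) then show ?case by (cases xs) (auto simp: set_Cons_def)
qed



definition subsp :: "('x \<Rightarrow> 'k::field) set \<Rightarrow> bool" where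
  "subsp X \<longleftrightarrow> (\<forall>x\<in>X. \<forall>y\<in>X. \<forall>a b. lin a x b y \<in> X)"

lemma subsp_sum:
  assumes "subsp X" "x0 \<in> X" "finite T" "\<And>t. t \<in> T \<Longrightarrow> x t \<in> X"
  shows "(\<Sum>t\<in>T. sc (c t) (x t)) \<in> X"
  using assms(3,4)
proof (induct T rule: finite_induct)
  case empty
  have "lin 0 x0 0 x0 \<in> X" using assms(1,2) unfolding subsp_def by blast
  moreover have "lin 0 x0 0 x0 = (0 :: 'a \<Rightarrow> 'b)" by (auto simp: lin_def fun_eq_iff)
  ultimately show ?case by (metis sum.empty)
next
  case (insert t T)
  have "lin (c t) (x t) 1 (\<Sum>t\<in>T. sc (c t) (x t)) \<in> X" using insert assms(1) unfolding subsp_def by blast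
  moreover have "lin (c t) (x t) 1 (\<Sum>t\<in>T. sc (c t) (x t)) = (\<Sum>t\<in>insert t T. sc (c t) (x t))"
    using insert by (simp add: lin_def sc_def fun_eq_iff sum_fun_app)
  ultimately show ?case by simp
qed

lemma rel_lin_mem:
  assumes "xs \<in> listset Ss" "i < length Ss" "x \<in> Ss ! i" "y \<in> Ss ! i"
  shows "(\<lambda>u. delta (xs[i := lin a x b y]) u - a * delta (xs[i := x]) u - b * delta (xs[i := y]) u)
     \<in> tens_rels Ss J"
  unfolding tens_rels_def using assms by blast

lemma rel_J_mem:
  assumes "xs \<in> listset Ss" "i < length xs" "xs ! i \<in> J"
  shows "delta xs \<in> tens_rels Ss J"
  unfolding tens_rels_def using assms by blast

lemma listset_length: "xs \<in> listset Ss \<Longrightarrow> length xs = length Ss"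
  by (simp add: listset_iff list_all2_lengthD)

lemma listset_nth: "xs \<in> listset Ss \<Longrightarrow> i < length Ss \<Longrightarrow> xs ! i \<in> Ss ! i"
  by (simp add: listset_iff list_all2_nthD2)

lemma multilin:
  assumes xs: "xs \<in> listset Ss" and i: "i < length Ss" and sub: "subsp (Ss ! i)"
    and T: "finite T" and xT: "\<And>t. t \<in> T \<Longrightarrow> x t \<in> Ss ! i"
  shows "(\<Sum>t\<in>T. sc (c t) (delta (xs[i := x t]))) - delta (xs[i := (\<Sum>t\<in>T. sc (c t) (x t))])
     \<in> fm.span (tens_rels Ss J)"
  using T xT
proof (induct T rule: finite_induct)
  case empty
  have x0: "xs ! i \<in> Ss ! i" using listset_nth[OF xs i] .
  have "(\<lambda>u. delta (xs[i := lin 0 (xs!i) 0 (xs!i)]) u - 0 * delta (xs[i := xs!i]) u - 0 * delta (xs[i := xs!i]) u)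
     \<in> tens_rels Ss J" by (rule rel_lin_mem[OF xs i x0 x0])
  moreover have "lin 0 (xs!i) 0 (xs!i) = 0" by (auto simp: lin_def fun_eq_iff)
  ultimately have "delta (xs[i := 0]) \<in> tens_rels Ss J" by (simp add: fun_eq_iff)
  then have "- delta (xs[i := 0]) \<in> fm.span (tens_rels Ss J)" by (intro fm.span_neg fm.span_base)
  then show ?case by (simp only: sum.empty diff_0)
next
  case (insert t T)
  define S where "S = (\<Sum>t\<in>T. sc (c t) (x t))"
  have x0: "xs ! i \<in> Ss ! i" using listset_nth[OF xs i] .
  have S: "S \<in> Ss ! i" unfolding S_def using insert by (intro subsp_sum[OF sub x0]) auto
  have xt: "x t \<in> Ss ! i" using insert by auto
  have r: "(\<lambda>u. delta (xs[i := lin (c t) (x t) 1 S]) u - c t * delta (xs[i := x t]) u - 1 * delta (xs[i := S]) u)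
     \<in> tens_rels Ss J" by (rule rel_lin_mem[OF xs i xt S])
  have IH: "(\<Sum>t\<in>T. sc (c t) (delta (xs[i := x t]))) - delta (xs[i := S]) \<in> fm.span (tens_rels Ss J)"
    using insert.hyps(3) insert.prems unfolding S_def by blast
  have eq1: "lin (c t) (x t) 1 S = (\<Sum>t\<in>insert t T. sc (c t) (x t))"
    using insert by (simp add: S_def lin_def sc_def fun_eq_iff sum_fun_app)
  have eqn: "(\<Sum>t\<in>insert t T. sc (c t) (delta (xs[i := x t]))) - delta (xs[i := (\<Sum>t\<in>insert t T. sc (c t) (x t))])
     = ((\<Sum>t\<in>T. sc (c t) (delta (xs[i := x t]))) - delta (xs[i := S]))
       - (\<lambda>u. delta (xs[i := lin (c t) (x t) 1 S]) u - c t * delta (xs[i := x t]) u - 1 * delta (xs[i := S]) u)"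
    using insert unfolding eq1[symmetric] by (simp add: sc_def fun_eq_iff sum_fun_app)
  show ?case unfolding eqn by (rule fm.span_diff[OF IH fm.span_base[OF r]])
qed



definition merge :: "('b \<Rightarrow> 'b \<Rightarrow> 'b) \<Rightarrow> nat \<Rightarrow> 'b list \<Rightarrow> 'b list" where
  "merge mul i t = take i t @ [mul (t ! i) (t ! Suc i)] @ drop (Suc (Suc i)) t"

definition Dm :: "(('p \<Rightarrow> 'k) \<Rightarrow> ('p \<Rightarrow> 'k) \<Rightarrow> ('p \<Rightarrow> 'k)) \<Rightarrow> ('p \<Rightarrow> 'k) list \<Rightarrow> (('p \<Rightarrow> 'k) list \<Rightarrow> 'k::field)" where
  "Dm mul t = (\<Sum>i<length t - 1. sc ((-1) ^ i) (delta (merge mul i t)))"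

lemma bar_d_ext: "bar_d mul z = ext (Dm mul) z"
  unfolding bar_d_def ext_def Dm_def merge_def by (simp add: sum_fun_app sc_def)

lemma mu_map_ext: "mu_map mul z = ext (\<lambda>t. mul (t ! 0) (t ! 1)) z"
  unfolding mu_map_def ext_def by simp

lemma merge_Suc: "merge mul (Suc i) (x # l) = x # merge mul i l"
  unfolding merge_def by simp

lemma merge_0: "merge mul 0 (x # y # l) = mul x y # l"
  unfolding merge_def by simp

lemma Dm_Cons:
  "l \<noteq> [] \<Longrightarrow> Dm mul (x # l) = delta (merge mul 0 (x # l)) - (\<Sum>i<length l - 1. sc ((-1) ^ i) (delta (x # merge mul i l)))"
proof -
  assume l: "l \<noteq> []"
  then have len: "length (x # l) - 1 = Suc (length l - 1)" by (cases l) auto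
  show ?thesis unfolding Dm_def len sum.lessThan_Suc_shift
    by (simp add: merge_Suc fun_eq_iff sum_fun_app sc_def sum_negf[symmetric])
qed

lemma fsupp_Dm: "fsupp (Dm mul t)"
  unfolding Dm_def by (intro fsupp_sum fsupp_sc fsupp_delta)

lemma s_sum_lin:
  assumes "\<And>a b x y. s (lin a x b y) = lin a (s x) b (s y)"
  shows "s (\<Sum>t\<in>T. sc (c t) (f t)) = (\<Sum>t\<in>T. sc (c t) (s (f t)))"
proof (induct T rule: infinite_finite_induct)
  case (infinite A)
  have "s (lin 0 0 0 0) = lin 0 (s 0) 0 (s 0)" by (rule assms)
  then show ?case using infinite by (simp add: lin_def zero_fun_def)
next
  case empty
  have "s (lin 0 0 0 0) = lin 0 (s 0) 0 (s 0)" by (rule assms)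
  then show ?case by (simp add: lin_def zero_fun_def)
next
  case (insert t T)
  have "s (lin (c t) (f t) 1 (\<Sum>t\<in>T. sc (c t) (f t))) = lin (c t) (s (f t)) 1 (s (\<Sum>t\<in>T. sc (c t) (f t)))"
    by (rule assms)
  moreover have "lin (c t) (f t) 1 (\<Sum>t\<in>T. sc (c t) (f t)) = (\<Sum>t\<in>insert t T. sc (c t) (f t))"
    using insert by (simp add: lin_def sc_def fun_eq_iff sum_fun_app)
  moreover have "lin (c t) (s (f t)) 1 (\<Sum>t\<in>T. sc (c t) (s (f t))) = (\<Sum>t\<in>insert t T. sc (c t) (s (f t)))"
    using insert by (simp add: lin_def sc_def fun_eq_iff sum_fun_app)
  ultimately show ?case using insert.hyps(3) by metis
qed

lemma listset_Cons_iff: "x # xs \<in> listset (S # Ss) \<longleftrightarrow> x \<in> S \<and> xs \<in> listset Ss"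
  by (auto simp: set_Cons_def)

lemma listset_Cons_E: "t \<in> listset (S # Ss) \<Longrightarrow> (\<And>x xs. t = x # xs \<Longrightarrow> x \<in> S \<Longrightarrow> xs \<in> listset Ss \<Longrightarrow> P) \<Longrightarrow> P"
  by (auto simp: set_Cons_def)



locale strat_setup =
  fixes R :: "('p \<Rightarrow> 'k::field) set" and mul :: "('p \<Rightarrow> 'k) \<Rightarrow> ('p \<Rightarrow> 'k) \<Rightarrow> ('p \<Rightarrow> 'k)"
    and e :: "'p \<Rightarrow> 'k" and J :: "('p \<Rightarrow> 'k) set"
    and K :: "'i set" and \<rho> :: "'i \<Rightarrow> 'p \<Rightarrow> 'k" and s :: "'i \<Rightarrow> ('p \<Rightarrow> 'k) \<Rightarrow> ('p \<Rightarrow> 'k)"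
  assumes finK: "finite K"
    and subL: "subsp (left_mod R mul e)" and subC: "subsp (corner R mul e)" and subN: "subsp (right_mod R mul e)"
    and L0: "0 \<in> left_mod R mul e" and C0: "0 \<in> corner R mul e" and N0: "0 \<in> right_mod R mul e"
    and rhoL: "\<And>k. k \<in> K \<Longrightarrow> \<rho> k \<in> left_mod R mul e"
    and sC: "\<And>k x. k \<in> K \<Longrightarrow> x \<in> left_mod R mul e \<Longrightarrow> s k x \<in> corner R mul e"
    and s_lin: "\<And>k a b x y. s k (lin a x b y) = lin a (s k x) b (s k y)"
    and sJ: "\<And>k x. k \<in> K \<Longrightarrow> x \<in> J \<Longrightarrow> s k x \<in> J"
    and decomp: "\<And>m. m \<in> left_mod R mul e \<Longrightarrow> (\<Sum>k\<in>K. mul (\<rho> k) (s k m)) = m"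
    and decompL: "\<And>k m. k \<in> K \<Longrightarrow> m \<in> left_mod R mul e \<Longrightarrow> mul (\<rho> k) (s k m) \<in> left_mod R mul e"
    and s_mulC: "\<And>k m c. k \<in> K \<Longrightarrow> m \<in> left_mod R mul e \<Longrightarrow> c \<in> corner R mul e \<Longrightarrow> s k (mul m c) = mul (s k m) c"
    and s_mulN: "\<And>k m n. k \<in> K \<Longrightarrow> m \<in> left_mod R mul e \<Longrightarrow> n \<in> right_mod R mul e \<Longrightarrow> s k (mul m n) = mul (s k m) n"
    and sN: "\<And>k m n. k \<in> K \<Longrightarrow> m \<in> left_mod R mul e \<Longrightarrow> n \<in> right_mod R mul e \<Longrightarrow> s k (mul m n) \<in> right_mod R mul e"
begin

abbreviation "L \<equiv> left_mod R mul e"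
abbreviation "C \<equiv> corner R mul e"
abbreviation "N \<equiv> right_mod R mul e"

lemma s_sum: "s k (\<Sum>t\<in>T. sc (c t) (f t)) = (\<Sum>t\<in>T. sc (c t) (s k (f t)))"
  by (rule s_sum_lin) (rule s_lin)

lemma part1b:
  assumes z: "z \<in> lspan (tens_gens (bar_mods R mul e 0))" and muJ: "mu_map mul z \<in> J"
  shows "z \<in> lspan (tens_rels (bar_mods R mul e 0) J \<union> balanced_rels R mul e)"
proof -
  let ?S = "listset [L, N]"
  let ?Y = "fm.span (tens_rels [L, N] J \<union> balanced_rels R mul e)"
  have bm: "bar_mods R mul e 0 = [L, N]" by (simp add: bar_mods_def)
  have zs: "z \<in> fm.span (delta ` ?S)" using z by (simp add: lspan_eq tens_gens_def bm)
  then have fz: "fsupp z" and Psub: "{t. z t \<noteq> 0} \<subseteq> ?S" by (auto simp: span_delta_iff)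
  define P where "P = {t. z t \<noteq> 0}"
  have finP: "finite P" using fz by (simp add: fsupp_def P_def)
  have PS: "P \<subseteq> ?S" using Psub by (simp add: P_def)
  have relsY: "fm.span (tens_rels [L, N] J) \<subseteq> ?Y" by (intro fm.span_mono) auto
  define F :: "('p \<Rightarrow> 'k) list \<Rightarrow> ('p \<Rightarrow> 'k) list \<Rightarrow> 'k"
    where "F t = (\<Sum>k\<in>K. delta [\<rho> k, s k (mul (t ! 0) (t ! 1))])" for t
  have step1: "delta t - F t \<in> ?Y" if tS: "t \<in> ?S" for t
  proof -
    from tS obtain m n where t: "t = [m, n]" and m: "m \<in> L" and n: "n \<in> N"
      by (auto simp: set_Cons_def)
    define x where "x k = mul (\<rho> k) (s k m)" for k
    have "(\<Sum>k\<in>K. sc 1 (delta (t[0 := x k]))) - delta (t[0 := (\<Sum>k\<in>K. sc 1 (x k))]) \<in> fm.span (tens_rels [L, N] J)"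
      using tS by (intro multilin) (auto simp: subL finK x_def decompL m)
    moreover have "(\<Sum>k\<in>K. sc 1 (x k)) = m" using decomp[OF m] by (simp add: x_def sc_def)
    ultimately have a: "(\<Sum>k\<in>K. delta (t[0 := x k])) - delta t \<in> ?Y" using relsY t by (auto simp: sc_def)
    have b: "delta (t[0 := x k]) - delta [\<rho> k, s k (mul m n)] \<in> balanced_rels R mul e" if k: "k \<in> K" for k
    proof -
      have mem: "(\<lambda>u. delta [mul (\<rho> k) (s k m), n] u - delta [\<rho> k, mul (s k m) n] u) \<in> balanced_rels R mul e"
        unfolding balanced_rels_def using rhoL[OF k] sC[OF k m] n by blast
      have eq: "delta (t[0 := x k]) - delta [\<rho> k, s k (mul m n)]
          = (\<lambda>u. delta [mul (\<rho> k) (s k m), n] u - delta [\<rho> k, mul (s k m) n] u)"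
        by (simp add: t x_def s_mulN[OF k m n] fun_eq_iff)
      show ?thesis unfolding eq by (rule mem)
    qed
    have "(\<Sum>k\<in>K. delta (t[0 := x k]) - delta [\<rho> k, s k (mul m n)]) \<in> ?Y"
      using b by (intro fm.span_sum fm.span_base) auto
    then have "(\<Sum>k\<in>K. delta (t[0 := x k])) - F t \<in> ?Y" by (simp add: sum_subtractf F_def t)
    from fm.span_diff[OF this a] show ?thesis by simp
  qed
  have zexp: "z = (\<Sum>t\<in>P. sc (z t) (delta t))" using fsupp_expand[OF fz] by (simp add: P_def)
  have st2: "z - (\<Sum>t\<in>P. sc (z t) (F t)) \<in> ?Y"
  proof -
    have "(\<Sum>t\<in>P. sc (z t) (delta t - F t)) \<in> ?Y" using step1 PS by (intro fm.span_sum fm.span_scale) auto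
    then show ?thesis by (simp add: zexp[symmetric] fm.scale_right_diff_distrib sum_subtractf)
  qed
  have mu: "mu_map mul z = (\<Sum>t\<in>P. sc (z t) (mul (t ! 0) (t ! 1)))"
    unfolding mu_map_ext ext_def P_def by (simp add: fun_eq_iff sum_fun_app sc_def)
  have st3: "(\<Sum>t\<in>P. sc (z t) (F t)) - (\<Sum>k\<in>K. delta [\<rho> k, s k (mu_map mul z)]) \<in> ?Y"
  proof -
    have each: "(\<Sum>t\<in>P. sc (z t) (delta [\<rho> k, s k (mul (t ! 0) (t ! 1))])) - delta [\<rho> k, s k (mu_map mul z)] \<in> ?Y"
      if k: "k \<in> K" for k
    proof -
      have mnN: "s k (mul (t ! 0) (t ! 1)) \<in> N" if "t \<in> P" for t
        using that PS k sN by (auto simp: set_Cons_def)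
      have smu: "s k (mu_map mul z) = (\<Sum>t\<in>P. sc (z t) (s k (mul (t ! 0) (t ! 1))))"
        unfolding mu by (rule s_sum)
      have smuN: "s k (mu_map mul z) \<in> N" unfolding smu using mnN finP by (intro subsp_sum[OF subN N0]) auto
      define xs where "xs = [\<rho> k, s k (mu_map mul z)]"
      have xs: "xs \<in> listset [L, N]" using rhoL[OF k] smuN by (auto simp: xs_def set_Cons_def)
      have "(\<Sum>t\<in>P. sc (z t) (delta (xs[1 := s k (mul (t ! 0) (t ! 1))])))
          - delta (xs[1 := (\<Sum>t\<in>P. sc (z t) (s k (mul (t ! 0) (t ! 1))))]) \<in> fm.span (tens_rels [L, N] J)"
        by (rule multilin[OF xs]) (use mnN in \<open>auto simp: subN finP\<close>)
      then show ?thesis using relsY unfolding xs_def smu[symmetric] by auto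
    qed
    have "(\<Sum>k\<in>K. (\<Sum>t\<in>P. sc (z t) (delta [\<rho> k, s k (mul (t ! 0) (t ! 1))])) - delta [\<rho> k, s k (mu_map mul z)]) \<in> ?Y"
      using each by (intro fm.span_sum) auto
    moreover have "(\<Sum>t\<in>P. sc (z t) (F t)) = (\<Sum>k\<in>K. (\<Sum>t\<in>P. sc (z t) (delta [\<rho> k, s k (mul (t ! 0) (t ! 1))])))"
      unfolding F_def by (simp add: fm.scale_sum_right sum.swap[of _ P])
    ultimately show ?thesis by (simp add: sum_subtractf)
  qed
  have st4: "(\<Sum>k\<in>K. delta [\<rho> k, s k (mu_map mul z)]) \<in> ?Y"
  proof (intro fm.span_sum fm.span_base UnI1)
    fix k assume k: "k \<in> K"
    have smuJ: "s k (mu_map mul z) \<in> J" by (rule sJ[OF k muJ])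
    have mnN: "s k (mul (t ! 0) (t ! 1)) \<in> N" if "t \<in> P" for t
      using that PS k sN by (auto simp: set_Cons_def)
    have smu: "s k (mu_map mul z) = (\<Sum>t\<in>P. sc (z t) (s k (mul (t ! 0) (t ! 1))))"
      unfolding mu by (rule s_sum)
    have smuN: "s k (mu_map mul z) \<in> N" unfolding smu using mnN finP by (intro subsp_sum[OF subN N0]) auto
    show "delta [\<rho> k, s k (mu_map mul z)] \<in> tens_rels [L, N] J"
      by (rule rel_J_mem[where i=1]) (use rhoL[OF k] smuN smuJ in \<open>auto simp: set_Cons_def\<close>)
  qed
  have "z = (z - (\<Sum>t\<in>P. sc (z t) (F t))) + ((\<Sum>t\<in>P. sc (z t) (F t)) - (\<Sum>k\<in>K. delta [\<rho> k, s k (mu_map mul z)]))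
      + (\<Sum>k\<in>K. delta [\<rho> k, s k (mu_map mul z)])" by simp
  also have "\<dots> \<in> ?Y" using st2 st3 st4 by (intro fm.span_add)
  finally show ?thesis by (simp add: lspan_eq bm)
qed

end



lemma Dm_CC: "Dm mul (x # y # l) = delta (mul x y # l) + (\<Sum>i<length l. sc (- ((-1) ^ i)) (delta (x # merge mul i (y # l))))"
proof -
  have "length (x # y # l) - 1 = Suc (length l)" by simp
  then show ?thesis unfolding Dm_def
    by (simp only: sum.lessThan_Suc_shift) (simp add: merge_Suc merge_0 sc_def fun_eq_iff sum_fun_app sum_negf)
qed

lemma sum_shift_merge:
  "(\<Sum>i<Suc n. sc (c i) (f (merge mul i (y # w # l)))) = sc (c 0) (f (mul y w # l)) + (\<Sum>i<n. sc (c (Suc i)) (f (y # merge mul i (w # l))))"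
  by (simp only: sum.lessThan_Suc_shift) (simp add: merge_Suc merge_0)

context strat_setup begin

definition hmap :: "('p \<Rightarrow> 'k) list \<Rightarrow> ('p \<Rightarrow> 'k) list \<Rightarrow> 'k" where
  "hmap t = (\<Sum>k\<in>K. delta (\<rho> k # s k (hd t) # tl t))"

lemma hmap_Cons: "hmap (x # l) = (\<Sum>k\<in>K. delta (\<rho> k # s k x # l))"
  by (simp add: hmap_def)

lemma fsupp_hmap: "fsupp (hmap t)"
  unfolding hmap_def by (intro fsupp_sum fsupp_delta)

abbreviation Tl :: "nat \<Rightarrow> ('p \<Rightarrow> 'k) set list" where
  "Tl n \<equiv> replicate n C @ [N]"

lemma bm_eq: "bar_mods R mul e n = L # Tl n"
  by (simp add: bar_mods_def)

lemma claimA: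
  assumes t: "t \<in> listset (L # Tl (Suc n))"
  shows "ext (Dm mul) (hmap t) + ext hmap (Dm mul t) - delta t \<in> fm.span (tens_rels (L # Tl (Suc n)) J)"
proof -
  from t obtain m c1 r where tt: "t = m # c1 # r" and m: "m \<in> L" and c1: "c1 \<in> C" and r: "r \<in> listset (Tl n)"
    by (auto simp: set_Cons_def)
  have e1: "ext (Dm mul) (hmap t) = (\<Sum>k\<in>K. Dm mul (\<rho> k # s k m # c1 # r))"
    unfolding hmap_def tt by (subst ext_sum) (auto simp: fsupp_delta ext_delta)
  have e2: "ext hmap (Dm mul t) = (\<Sum>i<Suc (length r). sc ((-1) ^ i) (hmap (merge mul i t)))"
    unfolding Dm_def tt by (subst ext_sum) (auto simp: fsupp_delta fsupp_sc ext_delta ext_sc)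
  have e3: "\<dots> = hmap (mul m c1 # r) + (\<Sum>i<length r. sc (- ((-1) ^ i)) (hmap (m # merge mul i (c1 # r))))"
    unfolding tt by (subst sum_shift_merge) simp
  have e4: "Dm mul (\<rho> k # s k m # c1 # r) = delta (mul (\<rho> k) (s k m) # c1 # r)
      - delta (\<rho> k # mul (s k m) c1 # r) + (\<Sum>i<length r. sc ((-1) ^ i) (delta (\<rho> k # s k m # merge mul i (c1 # r))))" for k
    unfolding Dm_CC by (simp only: length_Cons sum.lessThan_Suc_shift) (simp add: merge_Suc merge_0 sc_def fun_eq_iff sum_fun_app)
  have hm: "hmap (mul m c1 # r) = (\<Sum>k\<in>K. delta (\<rho> k # mul (s k m) c1 # r))"
    unfolding hmap_Cons by (rule sum.cong[OF refl]) (simp add: s_mulC[OF _ m c1])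
  have main: "ext (Dm mul) (hmap t) + ext hmap (Dm mul t) = (\<Sum>k\<in>K. delta (mul (\<rho> k) (s k m) # c1 # r))"
    unfolding e1 e2 e3 e4 hm unfolding hmap_Cons
    by (simp add: fun_eq_iff sum_fun_app sc_def sum.distrib sum_subtractf sum_distrib_left sum_negf
        sum.swap[of _ K "{..<length r}"])
  define x where "x k = mul (\<rho> k) (s k m)" for k
  have "(\<Sum>k\<in>K. sc 1 (delta (t[0 := x k]))) - delta (t[0 := (\<Sum>k\<in>K. sc 1 (x k))]) \<in> fm.span (tens_rels (L # Tl (Suc n)) J)"
    using t by (intro multilin) (auto simp: subL finK x_def decompL m)
  moreover have "(\<Sum>k\<in>K. sc 1 (x k)) = m" using decomp[OF m] by (simp add: x_def sc_def)
  ultimately show ?thesis unfolding main by (simp add: sc_def tt x_def)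
qed

end



context strat_setup begin

lemma claimB:
  assumes x: "x \<in> tens_rels (L # Tl n) J"
  shows "fsupp x \<and> ext hmap x \<in> fm.span (tens_rels (L # Tl (Suc n)) J)"
proof -
  let ?Ss = "L # Tl n" and ?Ss' = "L # C # Tl n"
  have TlS: "Tl (Suc n) = C # Tl n" by simp
  from x consider
    (lin) xs i a b y y' where "x = (\<lambda>u. delta (xs[i := lin a y b y']) u - a * delta (xs[i := y]) u - b * delta (xs[i := y']) u)"
      "xs \<in> listset ?Ss" "i < length ?Ss" "y \<in> ?Ss ! i" "y' \<in> ?Ss ! i"
  | (J) xs i where "x = delta xs" "xs \<in> listset ?Ss" "i < length xs" "xs ! i \<in> J"
    unfolding tens_rels_def by blast
  then show ?thesis
  proof cases
    case lin
    from lin(2) obtain x0 xs' where xs: "xs = x0 # xs'" and x0: "x0 \<in> L" and xs': "xs' \<in> listset (Tl n)"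
      by (auto simp: set_Cons_def)
    have xeq: "x = delta (xs[i := lin a y b y']) - sc a (delta (xs[i := y])) - sc b (delta (xs[i := y']))"
      unfolding lin(1) by (simp add: fun_eq_iff sc_def)
    have fx: "fsupp x" unfolding xeq by (intro fsupp_diff fsupp_sc fsupp_delta)
    have ex: "ext hmap x = hmap (xs[i := lin a y b y']) - sc a (hmap (xs[i := y])) - sc b (hmap (xs[i := y']))"
      unfolding xeq by (simp add: ext_diff fsupp_diff fsupp_sc fsupp_delta ext_sc ext_delta)
    define ys where "ys k = \<rho> k # s k x0 # xs'" for k
    have ys: "ys k \<in> listset ?Ss'" if k: "k \<in> K" for k
      using rhoL[OF k] sC[OF k x0] xs' by (simp add: ys_def set_Cons_def)
    show ?thesis
    proof (cases i)
      case 0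
      have yL: "y \<in> L" "y' \<in> L" using lin 0 by auto
      have "ext hmap x = (\<Sum>k\<in>K. (\<lambda>u. delta ((ys k)[1 := lin a (s k y) b (s k y')]) u
            - a * delta ((ys k)[1 := s k y]) u - b * delta ((ys k)[1 := s k y']) u))"
        unfolding ex 0 xs by (simp add: hmap_Cons ys_def s_lin fun_eq_iff sum_fun_app sc_def sum_subtractf sum_distrib_left)
      also have "\<dots> \<in> fm.span (tens_rels (L # Tl (Suc n)) J)"
        unfolding TlS
        by (intro fm.span_sum fm.span_base rel_lin_mem ys) (use yL sC in auto)
      finally show ?thesis using fx by simp
    next
      case (Suc j)
      have yy: "y \<in> ?Ss' ! Suc (Suc j)" "y' \<in> ?Ss' ! Suc (Suc j)" using lin Suc by auto
      have ij: "Suc (Suc j) < length ?Ss'" using lin Suc by auto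
      have "ext hmap x = (\<Sum>k\<in>K. (\<lambda>u. delta ((ys k)[Suc (Suc j) := lin a y b y']) u
            - a * delta ((ys k)[Suc (Suc j) := y]) u - b * delta ((ys k)[Suc (Suc j) := y']) u))"
        unfolding ex Suc xs by (simp add: hmap_Cons ys_def fun_eq_iff sum_fun_app sc_def sum_subtractf sum_distrib_left)
      also have "\<dots> \<in> fm.span (tens_rels (L # Tl (Suc n)) J)"
        unfolding TlS
        by (intro fm.span_sum fm.span_base rel_lin_mem ys ij yy)
      finally show ?thesis using fx by simp
    qed
  next
    case J
    from J(2) obtain x0 xs' where xs: "xs = x0 # xs'" and x0: "x0 \<in> L" and xs': "xs' \<in> listset (Tl n)"
      by (auto simp: set_Cons_def)
    define ys where "ys k = \<rho> k # s k x0 # xs'" for k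
    have ys: "ys k \<in> listset ?Ss'" if k: "k \<in> K" for k
      using rhoL[OF k] sC[OF k x0] xs' by (simp add: ys_def set_Cons_def)
    have ex: "ext hmap x = (\<Sum>k\<in>K. delta (ys k))"
      unfolding J(1) ext_delta xs hmap_Cons ys_def by simp
    have "delta (ys k) \<in> tens_rels ?Ss' J" if k: "k \<in> K" for k
    proof (cases i)
      case 0
      then show ?thesis using J sJ[OF k] by (intro rel_J_mem[OF ys[OF k], where i=1]) (auto simp: ys_def xs)
    next
      case (Suc j)
      then show ?thesis using J by (intro rel_J_mem[OF ys[OF k], where i="Suc (Suc j)"]) (auto simp: ys_def xs)
    qed
    then have "ext hmap x \<in> fm.span (tens_rels (L # Tl (Suc n)) J)"
      unfolding ex TlS by (intro fm.span_sum fm.span_base) auto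
    then show ?thesis using J(1) fsupp_delta by simp
  qed
qed

lemma part2:
  assumes n: "n \<ge> 1" and z: "z \<in> lspan (tens_gens (bar_mods R mul e n))"
    and dz: "bar_d mul z \<in> lspan (tens_rels (bar_mods R mul e (n - 1)) J)"
  shows "z \<in> lspan (bar_d mul ` tens_gens (bar_mods R mul e (Suc n)) \<union> tens_rels (bar_mods R mul e n) J)"
proof -
  obtain n' where nn: "n = Suc n'" using n by (cases n) auto
  let ?S = "listset (L # Tl (Suc n'))"
  let ?Rn = "fm.span (tens_rels (L # Tl (Suc n')) J)"
  let ?Y = "fm.span (bar_d mul ` tens_gens (L # Tl (Suc (Suc n'))) \<union> tens_rels (L # Tl (Suc n')) J)"
  have zs: "z \<in> fm.span (delta ` ?S)" using z by (simp add: lspan_eq tens_gens_def bm_eq nn)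
  then have fz: "fsupp z" and Psub: "{t. z t \<noteq> 0} \<subseteq> ?S" by (auto simp: span_delta_iff)
  define P where "P = {t. z t \<noteq> 0}"
  have PS: "P \<subseteq> ?S" using Psub by (simp add: P_def)
  have zexp: "z = (\<Sum>t\<in>P. sc (z t) (delta t))" using fsupp_expand[OF fz] by (simp add: P_def)
  have finP: "finite P" using fz by (simp add: fsupp_def P_def)
  define Hz where "Hz = ext hmap z"
  have Hz: "Hz = (\<Sum>t\<in>P. sc (z t) (hmap t))"
    unfolding Hz_def by (subst zexp) (simp add: ext_sum fsupp_sc fsupp_delta ext_sc ext_delta)
  have fHz: "\<forall>t\<in>P. fsupp (sc (z t) (hmap t))" by (auto intro: fsupp_sc fsupp_hmap)
  have dHz: "bar_d mul Hz = (\<Sum>t\<in>P. sc (z t) (ext (Dm mul) (hmap t)))"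
    unfolding bar_d_ext Hz using fHz by (subst ext_sum) (auto simp: ext_sc)
  have dz': "bar_d mul z = (\<Sum>t\<in>P. sc (z t) (Dm mul t))"
    unfolding bar_d_ext by (subst zexp) (simp add: ext_sum fsupp_sc fsupp_delta ext_sc ext_delta)
  have Hdz: "ext hmap (bar_d mul z) = (\<Sum>t\<in>P. sc (z t) (ext hmap (Dm mul t)))"
    unfolding dz' by (subst ext_sum) (auto simp: ext_sc fsupp_sc fsupp_Dm)
  have A: "(\<Sum>t\<in>P. sc (z t) (ext (Dm mul) (hmap t) + ext hmap (Dm mul t) - delta t)) \<in> ?Rn"
    using PS claimA by (intro fm.span_sum fm.span_scale) auto
  have eqz: "z = bar_d mul Hz + ext hmap (bar_d mul z) - (\<Sum>t\<in>P. sc (z t) (ext (Dm mul) (hmap t) + ext hmap (Dm mul t) - delta t))"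
  proof -
    have s: "(\<Sum>t\<in>P. sc (z t) (ext (Dm mul) (hmap t) + ext hmap (Dm mul t) - delta t))
      = (\<Sum>t\<in>P. sc (z t) (ext (Dm mul) (hmap t))) + (\<Sum>t\<in>P. sc (z t) (ext hmap (Dm mul t)))
        - (\<Sum>t\<in>P. sc (z t) (delta t))"
      by (simp add: fm.scale_right_diff_distrib fm.scale_right_distrib sum_subtractf sum.distrib)
    show ?thesis unfolding dHz Hdz s zexp[symmetric] by simp
  qed
  have B1: "bar_d mul Hz \<in> ?Y"
  proof -
    have "bar_d mul Hz = (\<Sum>t\<in>P. sc (z t) (\<Sum>k\<in>K. bar_d mul (delta (\<rho> k # s k (hd t) # tl t))))"
    proof -
      have "ext (Dm mul) (hmap t) = (\<Sum>k\<in>K. bar_d mul (delta (\<rho> k # s k (hd t) # tl t)))" for t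
        unfolding hmap_def bar_d_ext by (rule ext_sum) (rule fsupp_delta)
      then show ?thesis unfolding dHz by simp
    qed
    also have "\<dots> \<in> ?Y"
    proof (intro fm.span_sum fm.span_scale fm.span_base UnI1 imageI)
      fix t k assume t: "t \<in> P" and k: "k \<in> K"
      then have "t \<in> ?S" using PS by auto
      then obtain m r where tt: "t = m # r" and m: "m \<in> L" and r: "r \<in> listset (Tl (Suc n'))"
        by (auto simp: set_Cons_def)
      show "delta (\<rho> k # s k (hd t) # tl t) \<in> tens_gens (L # Tl (Suc (Suc n')))"
        unfolding tens_gens_def using rhoL[OF k] sC[OF k m] r
        by (intro imageI) (simp add: tt set_Cons_def)
    qed
    finally show ?thesis .
  qed
  have B2: "ext hmap (bar_d mul z) \<in> ?Y"
  proof -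
    have "bar_d mul z \<in> fm.span (tens_rels (L # Tl n') J)" using dz by (simp add: lspan_eq bm_eq nn)
    then have "ext hmap (bar_d mul z) \<in> ?Rn" by (rule ext_span_map) (rule claimB)
    moreover have "?Rn \<subseteq> ?Y" by (intro fm.span_mono) auto
    ultimately show ?thesis by auto
  qed
  have "z \<in> ?Y" using B1 B2 A fm.span_mono[of "tens_rels (L # Tl (Suc n')) J" "bar_d mul ` tens_gens (L # Tl (Suc (Suc n'))) \<union> tens_rels (L # Tl (Suc n')) J"]
    by (subst eqz) (intro fm.span_diff fm.span_add; auto)
  then show ?thesis by (simp add: lspan_eq bm_eq nn)
qed

end



definition wfq :: "('v, 'a) quiver \<Rightarrow> bool" where
  "wfq Q \<longleftrightarrow> (\<forall>\<alpha>\<in>arrs Q. src Q \<alpha> \<in> verts Q \<and> tgt Q \<alpha> \<in> verts Q)"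

lemma valid_Nil: "valid_path Q (v, []) \<longleftrightarrow> v \<in> verts Q"
  by (simp add: valid_path_def)

lemma valid_Cons:
  assumes "wfq Q"
  shows "valid_path Q (v, a # xs) \<longleftrightarrow> v \<in> verts Q \<and> a \<in> arrs Q \<and> src Q a = v \<and> valid_path Q (tgt Q a, xs)"
proof
  assume h: "valid_path Q (v, a # xs)"
  then have a: "a \<in> arrs Q" and v: "v \<in> verts Q" and s: "src Q a = v" by (auto simp: valid_path_def)
  have "tgt Q a \<in> verts Q" using assms a by (auto simp: wfq_def)
  moreover have "xs \<noteq> [] \<longrightarrow> src Q (hd xs) = tgt Q a"
    using h unfolding valid_path_def by (cases xs) (auto dest: spec[of _ 0])
  moreover have "\<forall>i. Suc i < length xs \<longrightarrow> tgt Q (xs ! i) = src Q (xs ! Suc i)"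
    using h unfolding valid_path_def by (auto dest: spec[of _ "Suc _"])
  ultimately show "v \<in> verts Q \<and> a \<in> arrs Q \<and> src Q a = v \<and> valid_path Q (tgt Q a, xs)"
    using h a v s by (auto simp: valid_path_def)
next
  assume h: "v \<in> verts Q \<and> a \<in> arrs Q \<and> src Q a = v \<and> valid_path Q (tgt Q a, xs)"
  have "\<forall>i. Suc i < length (a # xs) \<longrightarrow> tgt Q ((a # xs) ! i) = src Q ((a # xs) ! Suc i)"
  proof (intro allI impI)
    fix i assume i: "Suc i < length (a # xs)"
    show "tgt Q ((a # xs) ! i) = src Q ((a # xs) ! Suc i)"
    proof (cases i)
      case 0 then show ?thesis using h i by (cases xs) (auto simp: valid_path_def)
    next
      case (Suc j) then show ?thesis using h i by (auto simp: valid_path_def)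
    qed
  qed
  then show "valid_path Q (v, a # xs)" using h by (auto simp: valid_path_def)
qed

lemma path_end_Nil: "path_end Q (v, []) = v"
  by (simp add: path_end_def)

lemma path_end_Cons: "path_end Q (v, a # xs) = path_end Q (tgt Q a, xs)"
  by (cases xs) (auto simp: path_end_def)

lemma path_end_append: "path_end Q (v, xs @ ys) = path_end Q (path_end Q (v, xs), ys)"
  by (cases ys) (auto simp: path_end_def)

lemma valid_append:
  assumes "wfq Q"
  shows "valid_path Q (v, xs @ ys) \<longleftrightarrow> valid_path Q (v, xs) \<and> valid_path Q (path_end Q (v, xs), ys)"
proof (induct xs arbitrary: v)
  case Nil
  have "valid_path Q (v, ys) \<Longrightarrow> v \<in> verts Q" by (simp add: valid_path_def)
  then show ?case by (auto simp: valid_Nil path_end_Nil)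
next
  case (Cons a xs)
  show ?case using Cons by (simp add: valid_Cons[OF assms] path_end_Cons)
qed

lemma valid_path_verts: "valid_path Q (v, xs) \<Longrightarrow> v \<in> verts Q"
  by (simp add: valid_path_def)

lemma valid_path_end_verts: "wfq Q \<Longrightarrow> valid_path Q (v, xs) \<Longrightarrow> path_end Q (v, xs) \<in> verts Q"
  by (cases xs rule: rev_cases) (auto simp: valid_path_def path_end_def wfq_def)

lemma sum_atMost_add:
  fixes p n :: nat
  shows "(\<Sum>i\<le>p + n. F i) = (\<Sum>i<p. F i) + (\<Sum>j\<le>n. F (p + j))"
proof (induct n)
  case 0 then show ?case by (simp add: lessThan_Suc_atMost[symmetric])
next
  case (Suc n) then show ?case by (simp add: add.assoc)
qed

definition EV :: "'v set \<Rightarrow> ('v \<times> 'a list \<Rightarrow> 'k::field)" where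
  "EV V = (\<lambda>p. if snd p = [] \<and> fst p \<in> V then 1 else 0)"

lemma pmul_EV_right: "pmul Q f (EV V) (v, zs) = (if path_end Q (v, zs) \<in> V then f (v, zs) else 0)"
proof -
  have "pmul Q f (EV V) (v, zs) = (\<Sum>i\<le>length zs. if i = length zs then
      (if path_end Q (v, zs) \<in> V then f (v, zs) else 0) else 0)"
    unfolding pmul_def EV_def prod.case by (intro sum.cong refl) auto
  also have "\<dots> = (if path_end Q (v, zs) \<in> V then f (v, zs) else 0)" by (simp add: sum.delta)
  finally show ?thesis .
qed

lemma pmul_EV_left: "pmul Q (EV V) f (v, zs) = (if v \<in> V then f (v, zs) else 0)"
proof -
  have "pmul Q (EV V) f (v, zs) = (\<Sum>i\<le>length zs. if i = 0 then
      (if v \<in> V then f (v, zs) else 0) else 0)"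
    unfolding pmul_def EV_def prod.case by (intro sum.cong refl) (auto simp: path_end_Nil)
  also have "\<dots> = (if v \<in> V then f (v, zs) else 0)" by (simp add: sum.delta)
  finally show ?thesis .
qed

lemma pmul_nonzero:
  assumes "pmul Q f g (v, zs) \<noteq> 0"
  shows "\<exists>i\<le>length zs. f (v, take i zs) \<noteq> 0 \<and> g (path_end Q (v, take i zs), drop i zs) \<noteq> 0"
proof -
  from assms obtain i where "i \<in> {..length zs}" "f (v, take i zs) * g (path_end Q (v, take i zs), drop i zs) \<noteq> 0"
    unfolding pmul_def by (metis (no_types, lifting) case_prod_conv sum.neutral)
  then show ?thesis by auto
qed

lemma path_alg_pmul:
  assumes wf: "wfq Q" and f: "f \<in> path_alg Q" and g: "g \<in> path_alg Q"
  shows "pmul Q f g \<in> path_alg Q"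
proof -
  let ?Sf = "{p. f p \<noteq> 0}" and ?Sg = "{p. g p \<noteq> 0}"
  have sub: "{p. pmul Q f g p \<noteq> 0} \<subseteq> (\<lambda>(p, q). (fst p, snd p @ snd q)) ` (?Sf \<times> ?Sg)"
  proof
    fix p assume "p \<in> {p. pmul Q f g p \<noteq> 0}"
    then obtain v zs where p: "p = (v, zs)" and nz: "pmul Q f g (v, zs) \<noteq> 0" by (cases p) auto
    from pmul_nonzero[OF nz] obtain i where "f (v, take i zs) \<noteq> 0" "g (path_end Q (v, take i zs), drop i zs) \<noteq> 0"
      by auto
    then show "p \<in> (\<lambda>(p, q). (fst p, snd p @ snd q)) ` (?Sf \<times> ?Sg)"
      unfolding p by (intro image_eqI[where x="((v, take i zs), (path_end Q (v, take i zs), drop i zs))"]) auto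
  qed
  have fin: "finite {p. pmul Q f g p \<noteq> 0}"
    using f g by (intro finite_subset[OF sub] finite_imageI finite_cartesian_product) (auto simp: path_alg_def)
  have val: "valid_path Q p" if "pmul Q f g p \<noteq> 0" for p
  proof -
    obtain v zs where p: "p = (v, zs)" by (cases p)
    from pmul_nonzero[of Q f g v zs] that p obtain i where
      "f (v, take i zs) \<noteq> 0" "g (path_end Q (v, take i zs), drop i zs) \<noteq> 0" by auto
    then have "valid_path Q (v, take i zs)" "valid_path Q (path_end Q (v, take i zs), drop i zs)"
      using f g by (auto simp: path_alg_def)
    then have "valid_path Q (v, take i zs @ drop i zs)" using valid_append[OF wf, of v "take i zs" "drop i zs"] by blast
    then show ?thesis by (simp add: p)
  qed
  show ?thesis using fin val by (simp add: path_alg_def)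
qed

lemma path_alg_restrict: "f \<in> path_alg Q \<Longrightarrow> (\<lambda>p. if P p then f p else 0) \<in> path_alg Q"
  unfolding path_alg_def by (auto elim: finite_subset[rotated])

lemma path_alg_lin:
  assumes "f \<in> path_alg Q" "g \<in> path_alg Q" shows "lin a f b g \<in> path_alg Q"
proof -
  have sub: "{p. lin a f b g p \<noteq> 0} \<subseteq> {p. f p \<noteq> 0} \<union> {p. g p \<noteq> 0}"
    by (auto simp: lin_def)
  show ?thesis using assms sub unfolding path_alg_def
    by (auto intro: finite_subset[OF sub])
qed

lemma path_alg_zero: "0 \<in> path_alg Q"
  by (simp add: path_alg_def)



lemma sq_simps:
  "verts (stretch_quiver A Q) = Inl ` verts Q \<union> {Inr (\<alpha>, j) | \<alpha> j. \<alpha> \<in> arrs Q \<and> 1 \<le> j \<and> j \<le> A - 1}"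
  "arrs (stretch_quiver A Q) = {(\<alpha>, j) | \<alpha> j. \<alpha> \<in> arrs Q \<and> 1 \<le> j \<and> j \<le> A}"
  "src (stretch_quiver A Q) (\<alpha>, j) = (if j = 1 then Inl (src Q \<alpha>) else Inr (\<alpha>, j - 1))"
  "tgt (stretch_quiver A Q) (\<alpha>, j) = (if j = A then Inl (tgt Q \<alpha>) else Inr (\<alpha>, j))"
  by (simp_all add: stretch_quiver_def)

lemma wfq_stretch:
  assumes "finite_quiver Q" "1 \<le> A" shows "wfq (stretch_quiver A Q)"
  using assms unfolding wfq_def finite_quiver_def by (auto simp: sq_simps)

definition pre :: "nat \<Rightarrow> 'v + 'a \<times> nat \<Rightarrow> ('a \<times> nat) list" where
  "pre A k = (case k of Inl u \<Rightarrow> [] | Inr (\<alpha>, j) \<Rightarrow> map (\<lambda>i. (\<alpha>, i)) [Suc j..<Suc A])"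

definition endv :: "('v, 'a) quiver \<Rightarrow> 'v + 'a \<times> nat \<Rightarrow> 'v + 'a \<times> nat" where
  "endv Q k = (case k of Inl u \<Rightarrow> Inl u | Inr (\<alpha>, j) \<Rightarrow> Inl (tgt Q \<alpha>))"

lemma chain_lemma:
  assumes fq: "finite_quiver Q" and A: "1 \<le> A" and \<alpha>: "\<alpha> \<in> arrs Q"
  shows "1 \<le> j \<Longrightarrow> j < A \<Longrightarrow>
    valid_path (stretch_quiver A Q) (Inr (\<alpha>, j), map (\<lambda>i. (\<alpha>, i)) [Suc j..<Suc A]) \<and>
    path_end (stretch_quiver A Q) (Inr (\<alpha>, j), map (\<lambda>i. (\<alpha>, i)) [Suc j..<Suc A]) = Inl (tgt Q \<alpha>) \<and>
    (\<forall>i < A - j. path_end (stretch_quiver A Q) (Inr (\<alpha>, j), take i (map (\<lambda>i. (\<alpha>, i)) [Suc j..<Suc A])) \<notin> Inl ` verts Q)"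
proof (induct "A - j" arbitrary: j)
  case 0 then show ?case by simp
next
  case (Suc d j)
  have wf: "wfq (stretch_quiver A Q)" by (rule wfq_stretch[OF fq A])
  have tv: "tgt Q \<alpha> \<in> verts Q" using fq \<alpha> by (auto simp: finite_quiver_def)
  have up: "[Suc j..<Suc A] = Suc j # [Suc (Suc j)..<Suc A]" using Suc by (simp add: upt_conv_Cons)
  have jv: "Inr (\<alpha>, j) \<in> verts (stretch_quiver A Q)" using Suc \<alpha> by (auto simp: sq_simps)
  have aa: "(\<alpha>, Suc j) \<in> arrs (stretch_quiver A Q)" using Suc \<alpha> by (auto simp: sq_simps)
  have sa: "src (stretch_quiver A Q) (\<alpha>, Suc j) = Inr (\<alpha>, j)" using Suc by (simp add: sq_simps)
  show ?case
  proof (cases "Suc j = A")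
    case True
    then have up2: "[Suc (Suc j)..<Suc A] = []" by simp
    have ta: "tgt (stretch_quiver A Q) (\<alpha>, Suc j) = Inl (tgt Q \<alpha>)" using True by (simp add: sq_simps)
    show ?thesis unfolding up up2 using jv aa sa ta tv True
      by (auto simp: valid_Cons[OF wf] valid_Nil path_end_Cons path_end_Nil sq_simps)
  next
    case False
    then have lt: "Suc j < A" using Suc by simp
    have ta: "tgt (stretch_quiver A Q) (\<alpha>, Suc j) = Inr (\<alpha>, Suc j)" using False by (simp add: sq_simps)
    have IH': "valid_path (stretch_quiver A Q) (Inr (\<alpha>, Suc j), map (\<lambda>i. (\<alpha>, i)) [Suc (Suc j)..<Suc A]) \<and>
      path_end (stretch_quiver A Q) (Inr (\<alpha>, Suc j), map (\<lambda>i. (\<alpha>, i)) [Suc (Suc j)..<Suc A]) = Inl (tgt Q \<alpha>) \<and>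
      (\<forall>i < A - Suc j. path_end (stretch_quiver A Q) (Inr (\<alpha>, Suc j), take i (map (\<lambda>i. (\<alpha>, i)) [Suc (Suc j)..<Suc A])) \<notin> Inl ` verts Q)"
      using Suc lt by (intro Suc(1)) auto
    have "\<forall>i < A - j. path_end (stretch_quiver A Q) (Inr (\<alpha>, j), take i (map (\<lambda>i. (\<alpha>, i)) [Suc j..<Suc A])) \<notin> Inl ` verts Q"
    proof (intro allI impI)
      fix i assume i: "i < A - j"
      show "path_end (stretch_quiver A Q) (Inr (\<alpha>, j), take i (map (\<lambda>i. (\<alpha>, i)) [Suc j..<Suc A])) \<notin> Inl ` verts Q"
      proof (cases i)
        case 0 then show ?thesis by (auto simp: path_end_Nil)
      next
        case (Suc i')
        then have "i' < A - Suc j" using i by simp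
        then show ?thesis using IH' unfolding up Suc by (simp add: path_end_Cons ta)
      qed
    qed
    then show ?thesis unfolding up using IH' jv aa sa ta
      by (simp add: valid_Cons[OF wf] path_end_Cons)
  qed
qed

lemma chain_prefix:
  assumes fq: "finite_quiver Q" and A: "1 \<le> A" and \<alpha>: "\<alpha> \<in> arrs Q"
  shows "1 \<le> j \<Longrightarrow> j < A \<Longrightarrow> valid_path (stretch_quiver A Q) (Inr (\<alpha>, j), zs) \<Longrightarrow>
    path_end (stretch_quiver A Q) (Inr (\<alpha>, j), zs) \<in> Inl ` verts Q \<Longrightarrow>
    \<exists>zs'. zs = map (\<lambda>i. (\<alpha>, i)) [Suc j..<Suc A] @ zs'"
proof (induct "A - j" arbitrary: j zs)
  case 0 then show ?case by simp
next
  case (Suc d j zs)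
  have wf: "wfq (stretch_quiver A Q)" by (rule wfq_stretch[OF fq A])
  have up: "[Suc j..<Suc A] = Suc j # [Suc (Suc j)..<Suc A]" using Suc by (simp add: upt_conv_Cons)
  show ?case
  proof (cases zs)
    case Nil then show ?thesis using Suc by (auto simp: path_end_Nil)
  next
    case (Cons b zs'')
    obtain \<beta> i where b: "b = (\<beta>, i)" by (cases b)
    have vb: "b \<in> arrs (stretch_quiver A Q)" "src (stretch_quiver A Q) b = Inr (\<alpha>, j)"
      "valid_path (stretch_quiver A Q) (tgt (stretch_quiver A Q) b, zs'')"
      using Suc.prems(3) unfolding Cons valid_Cons[OF wf] by auto
    then have bi: "\<beta> = \<alpha>" "i = Suc j" using Suc.prems(1) unfolding b by (auto simp: sq_simps split: if_splits)
    have pe: "path_end (stretch_quiver A Q) (tgt (stretch_quiver A Q) b, zs'') \<in> Inl ` verts Q"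
      using Suc.prems(4) unfolding Cons path_end_Cons .
    show ?thesis
    proof (cases "Suc j = A")
      case True
      then show ?thesis unfolding Cons b bi up by simp
    next
      case False
      then have lt: "Suc j < A" using Suc by simp
      have ta: "tgt (stretch_quiver A Q) b = Inr (\<alpha>, Suc j)" using False unfolding b bi by (simp add: sq_simps)
      have "\<exists>zs'. zs'' = map (\<lambda>i. (\<alpha>, i)) [Suc (Suc j)..<Suc A] @ zs'"
        using Suc(2) Suc.prems lt vb(3) pe unfolding ta by (intro Suc(1)) auto
      then obtain zs' where "zs'' = map (\<lambda>i. (\<alpha>, i)) [Suc (Suc j)..<Suc A] @ zs'" by blast
      then show ?thesis unfolding Cons b bi up by simp
    qed
  qed
qed

lemma K_props:
  assumes fq: "finite_quiver Q" and A: "1 \<le> A" and k: "k \<in> verts (stretch_quiver A Q)"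
  shows "valid_path (stretch_quiver A Q) (k, pre A k)"
    and "path_end (stretch_quiver A Q) (k, pre A k) = endv Q k"
    and "endv Q k \<in> Inl ` verts Q"
    and "\<And>i. i < length (pre A k) \<Longrightarrow> path_end (stretch_quiver A Q) (k, take i (pre A k)) \<notin> Inl ` verts Q"
    and "\<And>zs. valid_path (stretch_quiver A Q) (k, zs) \<Longrightarrow> path_end (stretch_quiver A Q) (k, zs) \<in> Inl ` verts Q
          \<Longrightarrow> \<exists>zs'. zs = pre A k @ zs'"
proof -
  have "(\<exists>u. k = Inl u \<and> u \<in> verts Q) \<or> (\<exists>\<alpha> j. k = Inr (\<alpha>, j) \<and> \<alpha> \<in> arrs Q \<and> 1 \<le> j \<and> j < A)"
    using k A by (auto simp: sq_simps)
  then have all: "valid_path (stretch_quiver A Q) (k, pre A k) \<and>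
    path_end (stretch_quiver A Q) (k, pre A k) = endv Q k \<and> endv Q k \<in> Inl ` verts Q \<and>
    (\<forall>i. i < length (pre A k) \<longrightarrow> path_end (stretch_quiver A Q) (k, take i (pre A k)) \<notin> Inl ` verts Q) \<and>
    (\<forall>zs. valid_path (stretch_quiver A Q) (k, zs) \<longrightarrow> path_end (stretch_quiver A Q) (k, zs) \<in> Inl ` verts Q
          \<longrightarrow> (\<exists>zs'. zs = pre A k @ zs'))"
  proof
    assume "\<exists>u. k = Inl u \<and> u \<in> verts Q"
    then obtain u where ku: "k = Inl u" "u \<in> verts Q" by auto
    then show ?thesis using k by (auto simp: pre_def endv_def valid_Nil path_end_Nil)
  next
    assume "\<exists>\<alpha> j. k = Inr (\<alpha>, j) \<and> \<alpha> \<in> arrs Q \<and> 1 \<le> j \<and> j < A"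
    then obtain \<alpha> j where kk: "k = Inr (\<alpha>, j)" "\<alpha> \<in> arrs Q" "1 \<le> j" "j < A" by auto
    have tv: "tgt Q \<alpha> \<in> verts Q" using fq kk by (auto simp: finite_quiver_def)
    have pk: "map (\<lambda>i. (\<alpha>, i)) [Suc j..<Suc A] = pre A k" by (simp add: kk pre_def del: upt_Suc)
    have ek: "Inl (tgt Q \<alpha>) = endv Q k" by (simp add: kk endv_def)
    have lenp: "A - j = length (pre A k)" by (simp add: pk[symmetric] del: upt_Suc)
    note c1 = chain_lemma[OF fq A kk(2) kk(3,4), unfolded pk ek lenp kk(1)[symmetric]]
    note c2 = chain_prefix[OF fq A kk(2) kk(3,4), unfolded pk ek lenp kk(1)[symmetric]]
    have "endv Q k \<in> Inl ` verts Q" using tv unfolding ek[symmetric] by auto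
    then show ?thesis using c1 c2 by auto
  qed
  then show "valid_path (stretch_quiver A Q) (k, pre A k)"
    and "path_end (stretch_quiver A Q) (k, pre A k) = endv Q k"
    and "endv Q k \<in> Inl ` verts Q"
    and "\<And>i. i < length (pre A k) \<Longrightarrow> path_end (stretch_quiver A Q) (k, take i (pre A k)) \<notin> Inl ` verts Q"
    and "\<And>zs. valid_path (stretch_quiver A Q) (k, zs) \<Longrightarrow> path_end (stretch_quiver A Q) (k, zs) \<in> Inl ` verts Q
          \<Longrightarrow> \<exists>zs'. zs = pre A k @ zs'" by blast+
qed



definition strip :: "('v, 'a) quiver \<Rightarrow> nat \<Rightarrow> 'v + 'a \<times> nat
    \<Rightarrow> (('v + 'a \<times> nat) \<times> ('a \<times> nat) list \<Rightarrow> 'k::field) \<Rightarrow> (('v + 'a \<times> nat) \<times> ('a \<times> nat) list \<Rightarrow> 'k)" where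
  "strip Q A k m = (\<lambda>(v, zs). if v = endv Q k then m (k, pre A k @ zs) else 0)"

lemma pmul_EV_right_fun: "pmul Q f (EV V) = (\<lambda>p. if path_end Q p \<in> V then f p else 0)"
  by (auto simp: fun_eq_iff pmul_EV_right)

lemma pmul_EV_left_fun: "pmul Q (EV V) f = (\<lambda>p. if fst p \<in> V then f p else 0)"
  by (auto simp: fun_eq_iff pmul_EV_left)

locale sctx =
  fixes Q :: "('v, 'a) quiver" and A :: nat
  assumes fq: "finite_quiver Q" and A1: "1 \<le> A"
begin

abbreviation "Q' \<equiv> stretch_quiver A Q"
abbreviation "V \<equiv> Inl ` verts Q"

lemma wf: "wfq Q'" by (rule wfq_stretch[OF fq A1])

lemma finK: "finite (verts Q')"
proof -
  have "verts Q' \<subseteq> Inl ` verts Q \<union> Inr ` (arrs Q \<times> {..A})" by (auto simp: sq_simps)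
  moreover have "finite (Inl ` verts Q \<union> Inr ` (arrs Q \<times> {..A}))" using fq by (auto simp: finite_quiver_def)
  ultimately show ?thesis by (rule finite_subset)
qed

lemma strip_apply: "strip Q A k m (v, zs) = (if v = endv Q k then m (k, pre A k @ zs) else 0)"
  by (simp add: strip_def)

lemma strip_pmul:
  assumes k: "k \<in> verts Q'"
    and cond: "\<And>i q. i < length (pre A k) \<Longrightarrow> f (k, take i (pre A k)) = 0 \<or> g (path_end Q' (k, take i (pre A k)), q) = 0"
  shows "strip Q A k (pmul Q' f g) = pmul Q' (strip Q A k f) g"
proof (rule ext)
  fix p :: "('v + 'a \<times> nat) \<times> ('a \<times> nat) list"
  obtain v zs where p: "p = (v, zs)" by (cases p)
  let ?p = "pre A k"
  show "strip Q A k (pmul Q' f g) p = pmul Q' (strip Q A k f) g p"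
  proof (cases "v = endv Q k")
    case False
    then show ?thesis unfolding p by (simp add: strip_apply pmul_def)
  next
    case True
    have pe: "path_end Q' (k, ?p) = endv Q k" by (rule K_props(2)[OF fq A1 k])
    have "pmul Q' f g (k, ?p @ zs) = (\<Sum>i\<le>length ?p + length zs. f (k, take i (?p @ zs)) * g (path_end Q' (k, take i (?p @ zs)), drop i (?p @ zs)))"
      by (simp add: pmul_def)
    also have "\<dots> = (\<Sum>i<length ?p. f (k, take i (?p @ zs)) * g (path_end Q' (k, take i (?p @ zs)), drop i (?p @ zs)))
        + (\<Sum>j\<le>length zs. f (k, take (length ?p + j) (?p @ zs)) * g (path_end Q' (k, take (length ?p + j) (?p @ zs)), drop (length ?p + j) (?p @ zs)))"
      by (rule sum_atMost_add)
    also have "(\<Sum>i<length ?p. f (k, take i (?p @ zs)) * g (path_end Q' (k, take i (?p @ zs)), drop i (?p @ zs))) = 0"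
    proof (intro sum.neutral ballI)
      fix i assume i: "i \<in> {..<length ?p}"
      then have "take i (?p @ zs) = take i ?p" by simp
      then show "f (k, take i (?p @ zs)) * g (path_end Q' (k, take i (?p @ zs)), drop i (?p @ zs)) = 0"
        using cond[of i "drop i (?p @ zs)"] i by auto
    qed
    also have "(\<Sum>j\<le>length zs. f (k, take (length ?p + j) (?p @ zs)) * g (path_end Q' (k, take (length ?p + j) (?p @ zs)), drop (length ?p + j) (?p @ zs)))
       = (\<Sum>j\<le>length zs. strip Q A k f (endv Q k, take j zs) * g (path_end Q' (endv Q k, take j zs), drop j zs))"
      by (intro sum.cong refl) (simp add: strip_apply path_end_append pe)
    finally show ?thesis unfolding p True by (simp add: strip_apply pmul_def)
  qed
qed

lemma strip_path_alg:
  assumes k: "k \<in> verts Q'" and f: "f \<in> path_alg Q'"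
  shows "strip Q A k f \<in> path_alg Q'"
proof -
  have sub: "{p. strip Q A k f p \<noteq> 0} \<subseteq> (\<lambda>zs. (endv Q k, zs)) ` ((\<lambda>zs. (k, pre A k @ zs)) -` {p. f p \<noteq> 0})"
    by (auto simp: strip_def split: if_splits)
  have fin: "finite ((\<lambda>zs. (k, pre A k @ zs)) -` {p. f p \<noteq> 0})"
    using f by (intro finite_vimageI) (auto simp: path_alg_def inj_on_def)
  have val: "valid_path Q' p" if "strip Q A k f p \<noteq> 0" for p
  proof -
    obtain v zs where p: "p = (v, zs)" by (cases p)
    from that have v: "v = endv Q k" and nz: "f (k, pre A k @ zs) \<noteq> 0" by (auto simp: p strip_apply split: if_splits)
    then have "valid_path Q' (k, pre A k @ zs)" using f by (auto simp: path_alg_def)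
    then have "valid_path Q' (path_end Q' (k, pre A k), zs)" by (simp add: valid_append[OF wf])
    then show ?thesis by (simp add: p v K_props(2)[OF fq A1 k])
  qed
  show ?thesis unfolding path_alg_def using finite_subset[OF sub finite_imageI[OF fin]] val by auto
qed

lemma strip_start: "strip Q A k f (v, zs) \<noteq> 0 \<Longrightarrow> v = endv Q k"
  by (auto simp: strip_apply split: if_splits)

lemma strip_lin: "strip Q A k (lin a x b y) = lin a (strip Q A k x) b (strip Q A k y)"
  by (auto simp: fun_eq_iff strip_def lin_def)

lemma rho_pmul:
  assumes k: "k \<in> verts Q'"
  shows "pmul Q' (delta (k, pre A k)) (strip Q A k m) = (\<lambda>(v, zs). if v = k \<and> (\<exists>zs'. zs = pre A k @ zs') then m (v, zs) else 0)"
proof (rule ext, clarify)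
  fix v zs
  let ?p = "pre A k"
  have pe: "path_end Q' (k, ?p) = endv Q k" by (rule K_props(2)[OF fq A1 k])
  have "pmul Q' (delta (k, ?p)) (strip Q A k m) (v, zs) = (\<Sum>i\<le>length zs. if i = length ?p then
      (if v = k \<and> take (length ?p) zs = ?p then strip Q A k m (endv Q k, drop (length ?p) zs) else 0) else 0)"
    unfolding pmul_def prod.case
  proof (intro sum.cong refl)
    fix i assume i: "i \<in> {..length zs}"
    show "delta (k, ?p) (v, take i zs) * strip Q A k m (path_end Q' (v, take i zs), drop i zs) =
      (if i = length ?p then (if v = k \<and> take (length ?p) zs = ?p then strip Q A k m (endv Q k, drop (length ?p) zs) else 0) else 0)"
    proof (cases "v = k \<and> take i zs = ?p")
      case True
      have "length (take i zs) = i" using i by simp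
      then have "i = length ?p" using True by simp
      then show ?thesis using True pe by (simp add: delta_def)
    next
      case False
      then show ?thesis by (auto simp: delta_def)
    qed
  qed
  also have "\<dots> = (if v = k \<and> (\<exists>zs'. zs = ?p @ zs') then m (v, zs) else 0)"
  proof (cases "v = k \<and> (\<exists>zs'. zs = ?p @ zs')")
    case True
    then obtain zs' where zs: "zs = ?p @ zs'" by auto
    show ?thesis using True by (simp add: zs strip_apply)
  next
    case False
    have "\<not> (length ?p \<le> length zs \<and> v = k \<and> take (length ?p) zs = ?p)"
    proof
      assume h: "length ?p \<le> length zs \<and> v = k \<and> take (length ?p) zs = ?p"
      then have "zs = ?p @ drop (length ?p) zs" by (metis append_take_drop_id)
      then show False using False h by blast
    qed
    then show ?thesis using False by (auto simp: sum.delta)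
  qed
  finally show "pmul Q' (delta (k, ?p)) (strip Q A k m) (v, zs) = (if v = k \<and> (\<exists>zs'. zs = ?p @ zs') then m (v, zs) else 0)" .
qed

lemma decomp_sum:
  assumes m: "m \<in> path_alg Q'" and me: "\<And>p. m p \<noteq> 0 \<Longrightarrow> path_end Q' p \<in> V"
  shows "(\<Sum>k\<in>verts Q'. pmul Q' (delta (k, pre A k)) (strip Q A k m)) = m"
proof (rule ext, clarify)
  fix v zs
  have "(\<Sum>k\<in>verts Q'. pmul Q' (delta (k, pre A k)) (strip Q A k m)) (v, zs)
      = (\<Sum>k\<in>verts Q'. if k = v then (if (\<exists>zs'. zs = pre A v @ zs') then m (v, zs) else 0) else 0)"
  proof -
    have "(\<Sum>k\<in>verts Q'. pmul Q' (delta (k, pre A k)) (strip Q A k m)) (v, zs)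
      = (\<Sum>k\<in>verts Q'. if v = k \<and> (\<exists>zs'. zs = pre A k @ zs') then m (v, zs) else 0)"
      unfolding sum_fun_app by (intro sum.cong refl) (simp add: rho_pmul)
    also have "\<dots> = (\<Sum>k\<in>verts Q'. if k = v then (if (\<exists>zs'. zs = pre A v @ zs') then m (v, zs) else 0) else 0)"
      by (intro sum.cong refl) auto
    finally show ?thesis .
  qed
  also have "\<dots> = m (v, zs)"
  proof (cases "m (v, zs) = 0")
    case True then show ?thesis by (simp add: sum.delta finK)
  next
    case False
    then have val: "valid_path Q' (v, zs)" using m by (auto simp: path_alg_def)
    then have vv: "v \<in> verts Q'" by (rule valid_path_verts)
    have "\<exists>zs'. zs = pre A v @ zs'" using K_props(5)[OF fq A1 vv val] me[OF False] by auto
    then show ?thesis using vv by (simp add: sum.delta finK)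
  qed
  finally show "(\<Sum>k\<in>verts Q'. pmul Q' (delta (k, pre A k)) (strip Q A k m)) (v, zs) = m (v, zs)" .
qed

end



lemma theta_start:
  assumes g0: "g0 \<in> path_alg Q" and nz: "theta A g0 (v, zs) \<noteq> 0"
  shows "v \<in> Inl ` verts Q"
proof -
  from nz have "{p. g0 p \<noteq> 0 \<and> stretch_path A p = (v, zs)} \<noteq> {}"
    unfolding theta_def by (metis (no_types, lifting) sum.empty)
  then obtain u xs where "g0 (u, xs) \<noteq> 0" "stretch_path A (u, xs) = (v, zs)" by auto
  moreover then have "valid_path Q (u, xs)" using g0 by (auto simp: path_alg_def)
  ultimately show ?thesis by (auto simp: stretch_path_def valid_path_def)
qed

context sctx begin

lemma E_eq: "(\<lambda>p. \<Sum>v\<in>verts Q. vtx (Inl v) p) = (EV V :: ('v + 'a \<times> nat) \<times> ('a \<times> nat) list \<Rightarrow> 'k::field)"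
proof (rule ext)
  fix p :: "('v + 'a \<times> nat) \<times> ('a \<times> nat) list"
  obtain x zs where p: "p = (x, zs)" by (cases p)
  have fin: "finite (verts Q)" using fq by (simp add: finite_quiver_def)
  show "(\<Sum>v\<in>verts Q. vtx (Inl v) p) = (EV V p :: 'k)"
  proof (cases x)
    case (Inl u)
    have "(\<Sum>v\<in>verts Q. vtx (Inl v) (x, zs)) = (\<Sum>v\<in>verts Q. if v = u then (if zs = [] then 1 else 0) else (0::'k))"
      by (intro sum.cong refl) (auto simp: vtx_def delta_def Inl)
    then show ?thesis using fin unfolding p by (auto simp: sum.delta EV_def Inl)
  next
    case (Inr w)
    then show ?thesis unfolding p by (auto simp: vtx_def delta_def EV_def)
  qed
qed

abbreviation "R' \<equiv> path_alg Q'"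
abbreviation "E \<equiv> EV V"

lemma Lset: "left_mod R' (pmul Q') E = {f \<in> R'. \<forall>p. f p \<noteq> 0 \<longrightarrow> path_end Q' p \<in> V}"
proof
  show "left_mod R' (pmul Q') E \<subseteq> {f \<in> R'. \<forall>p. f p \<noteq> 0 \<longrightarrow> path_end Q' p \<in> V}"
    unfolding left_mod_def pmul_EV_right_fun by (auto intro: path_alg_restrict split: if_splits)
  show "{f \<in> R'. \<forall>p. f p \<noteq> 0 \<longrightarrow> path_end Q' p \<in> V} \<subseteq> left_mod R' (pmul Q') E"
  proof
    fix f assume f: "f \<in> {f \<in> R'. \<forall>p. f p \<noteq> 0 \<longrightarrow> path_end Q' p \<in> V}"
    then have "f = pmul Q' f E" unfolding pmul_EV_right_fun by (auto simp: fun_eq_iff)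
    then show "f \<in> left_mod R' (pmul Q') E" unfolding left_mod_def using f by auto
  qed
qed

lemma Cset: "corner R' (pmul Q') E = {f \<in> R'. \<forall>p. f p \<noteq> 0 \<longrightarrow> fst p \<in> V \<and> path_end Q' p \<in> V}"
proof
  show "corner R' (pmul Q') E \<subseteq> {f \<in> R'. \<forall>p. f p \<noteq> 0 \<longrightarrow> fst p \<in> V \<and> path_end Q' p \<in> V}"
    unfolding corner_def pmul_EV_right_fun pmul_EV_left_fun
    by (auto intro!: path_alg_restrict split: if_splits)
  show "{f \<in> R'. \<forall>p. f p \<noteq> 0 \<longrightarrow> fst p \<in> V \<and> path_end Q' p \<in> V} \<subseteq> corner R' (pmul Q') E"
  proof
    fix f assume f: "f \<in> {f \<in> R'. \<forall>p. f p \<noteq> 0 \<longrightarrow> fst p \<in> V \<and> path_end Q' p \<in> V}"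
    then have "f = pmul Q' (pmul Q' E f) E" unfolding pmul_EV_right_fun pmul_EV_left_fun by (auto simp: fun_eq_iff)
    then show "f \<in> corner R' (pmul Q') E" unfolding corner_def using f by auto
  qed
qed

lemma Nset: "right_mod R' (pmul Q') E = {f \<in> R'. \<forall>p. f p \<noteq> 0 \<longrightarrow> fst p \<in> V}"
proof
  show "right_mod R' (pmul Q') E \<subseteq> {f \<in> R'. \<forall>p. f p \<noteq> 0 \<longrightarrow> fst p \<in> V}"
    unfolding right_mod_def pmul_EV_left_fun by (auto intro: path_alg_restrict split: if_splits)
  show "{f \<in> R'. \<forall>p. f p \<noteq> 0 \<longrightarrow> fst p \<in> V} \<subseteq> right_mod R' (pmul Q') E"
  proof
    fix f assume f: "f \<in> {f \<in> R'. \<forall>p. f p \<noteq> 0 \<longrightarrow> fst p \<in> V}"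
    then have "f = pmul Q' E f" unfolding pmul_EV_left_fun by (auto simp: fun_eq_iff)
    then show "f \<in> right_mod R' (pmul Q') E" unfolding right_mod_def using f by auto
  qed
qed

lemma lin_nz: "lin a x b y p \<noteq> 0 \<Longrightarrow> x p \<noteq> 0 \<or> y p \<noteq> 0"
  by (auto simp: lin_def)

lemma subsp_cond: "subsp {f \<in> R'. \<forall>p. f p \<noteq> 0 \<longrightarrow> P p}"
  unfolding subsp_def by (auto intro: path_alg_lin dest: lin_nz)

lemma zero_cond: "(0 :: _ \<Rightarrow> 'k::field) \<in> {f \<in> R'. \<forall>p. f p \<noteq> 0 \<longrightarrow> P p}"
  by (simp add: path_alg_zero)

lemma rho_alg: "k \<in> verts Q' \<Longrightarrow> (delta (k, pre A k) :: _ \<Rightarrow> 'k::field) \<in> R'"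
  unfolding path_alg_def using K_props(1)[OF fq A1] by (auto simp: delta_def)

lemma endv_nin: "k \<in> verts Q' \<Longrightarrow> i < length (pre A k) \<Longrightarrow> path_end Q' (k, take i (pre A k)) \<notin> V"
  using K_props(4)[OF fq A1] by blast

lemma strip_mul_start:
  assumes k: "k \<in> verts Q'" and c: "\<And>p. c p \<noteq> 0 \<Longrightarrow> fst p \<in> V"
  shows "strip Q A k (pmul Q' m c) = pmul Q' (strip Q A k m) c"
proof (rule strip_pmul[OF k])
  fix i q assume "i < length (pre A k)"
  then have "path_end Q' (k, take i (pre A k)) \<notin> V" by (rule endv_nin[OF k])
  then show "m (k, take i (pre A k)) = 0 \<or> c (path_end Q' (k, take i (pre A k)), q) = 0"
    using c[of "(path_end Q' (k, take i (pre A k)), q)"] by auto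
qed

lemma strip_gen:
  assumes k: "k \<in> verts Q'" and x1: "x1 \<in> R'" and g0: "g0 \<in> path_alg Q"
  shows "strip Q A k (pmul Q' (pmul Q' x1 (theta A g0)) y1) = pmul Q' (pmul Q' (strip Q A k x1) (theta A g0)) y1"
proof -
  let ?g = "theta A g0"
  have gs: "\<And>v zs. ?g (v, zs) \<noteq> 0 \<Longrightarrow> v \<in> V" using theta_start[OF g0] by blast
  have "strip Q A k (pmul Q' (pmul Q' x1 ?g) y1) = pmul Q' (strip Q A k (pmul Q' x1 ?g)) y1"
  proof (rule strip_pmul[OF k])
    fix i q assume i: "i < length (pre A k)"
    have "pmul Q' x1 ?g (k, take i (pre A k)) = 0"
      unfolding pmul_def prod.case
    proof (intro sum.neutral ballI)
      fix j assume j: "j \<in> {..length (take i (pre A k))}"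
      then have tj: "take j (take i (pre A k)) = take j (pre A k)" using i by (simp add: min_def)
      have "j < length (pre A k)" using j i by auto
      then have "path_end Q' (k, take j (pre A k)) \<notin> V" by (rule endv_nin[OF k])
      then show "x1 (k, take j (take i (pre A k))) * ?g (path_end Q' (k, take j (take i (pre A k))), drop j (take i (pre A k))) = 0"
        unfolding tj using gs by (metis mult_zero_right)
    qed
    then show "pmul Q' x1 ?g (k, take i (pre A k)) = 0 \<or> y1 (path_end Q' (k, take i (pre A k)), q) = 0" by simp
  qed
  also have "strip Q A k (pmul Q' x1 ?g) = pmul Q' (strip Q A k x1) ?g"
    by (rule strip_mul_start[OF k]) (use gs in auto)
  finally show ?thesis .
qed

end



context sctx begin

lemma gen_ideal_span: "gen_ideal Q' Gs = fm.span {pmul Q' (pmul Q' x g) y | x g y. x \<in> R' \<and> g \<in> Gs \<and> y \<in> R'}"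
  by (simp add: gen_ideal_def lspan_eq)

lemma setup_ok:
  assumes G: "G \<subseteq> path_alg Q"
  shows "strat_setup R' (pmul Q') E (gen_ideal Q' (theta A ` G)) (verts Q') (\<lambda>k. delta (k, pre A k)) (strip Q A)"
proof
  show "finite (verts Q')" by (rule finK)
  show "subsp (left_mod R' (pmul Q') E)" unfolding Lset by (rule subsp_cond)
  show "subsp (corner R' (pmul Q') E)" unfolding Cset by (rule subsp_cond)
  show "subsp (right_mod R' (pmul Q') E)" unfolding Nset by (rule subsp_cond)
  show "0 \<in> left_mod R' (pmul Q') E" unfolding Lset by (rule zero_cond)
  show "0 \<in> corner R' (pmul Q') E" unfolding Cset by (rule zero_cond)
  show "0 \<in> right_mod R' (pmul Q') E" unfolding Nset by (rule zero_cond)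
  show "delta (k, pre A k) \<in> left_mod R' (pmul Q') E" if k: "k \<in> verts Q'" for k
    unfolding Lset using rho_alg[OF k] K_props(2,3)[OF fq A1 k] by (auto simp: delta_def split: if_splits)
  show "strip Q A k x \<in> corner R' (pmul Q') E" if k: "k \<in> verts Q'" and x: "x \<in> left_mod R' (pmul Q') E" for k x
  proof -
    have x': "x \<in> R'" "\<And>p. x p \<noteq> 0 \<Longrightarrow> path_end Q' p \<in> V" using x unfolding Lset by auto
    have "strip Q A k x p \<noteq> 0 \<Longrightarrow> fst p \<in> V \<and> path_end Q' p \<in> V" for p
    proof -
      assume nz: "strip Q A k x p \<noteq> 0"
      obtain v zs where p: "p = (v, zs)" by (cases p)
      have v: "v = endv Q k" and xz: "x (k, pre A k @ zs) \<noteq> 0" using nz by (auto simp: p strip_apply split: if_splits)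
      have "path_end Q' (k, pre A k @ zs) \<in> V" by (rule x'(2)[OF xz])
      then show ?thesis using K_props(2,3)[OF fq A1 k] by (simp add: p v path_end_append)
    qed
    then show ?thesis unfolding Cset using strip_path_alg[OF k x'(1)] by auto
  qed
  show "strip Q A k (lin a x b y) = lin a (strip Q A k x) b (strip Q A k y)" for k a b x y by (rule strip_lin)
  show "strip Q A k x \<in> gen_ideal Q' (theta A ` G)" if k: "k \<in> verts Q'" and x: "x \<in> gen_ideal Q' (theta A ` G)" for k x
  proof -
    let ?X = "{pmul Q' (pmul Q' x g) y | x g y. x \<in> R' \<and> g \<in> theta A ` G \<and> y \<in> R'}"
    from x obtain T r where T: "finite T" "T \<subseteq> ?X" and xx: "x = (\<Sum>a\<in>T. sc (r a) a)"
      unfolding gen_ideal_span fm.span_explicit by auto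
    have "strip Q A k x = (\<Sum>a\<in>T. sc (r a) (strip Q A k a))" unfolding xx by (rule s_sum_lin) (rule strip_lin)
    also have "\<dots> \<in> fm.span ?X"
    proof (intro fm.span_sum fm.span_scale fm.span_base)
      fix a assume "a \<in> T"
      then obtain x1 g0 y1 where a: "a = pmul Q' (pmul Q' x1 (theta A g0)) y1" and x1: "x1 \<in> R'" and g0: "g0 \<in> G" and y1: "y1 \<in> R'"
        using T by blast
      have "strip Q A k a = pmul Q' (pmul Q' (strip Q A k x1) (theta A g0)) y1"
        unfolding a by (rule strip_gen[OF k x1]) (use g0 G in auto)
      then show "strip Q A k a \<in> ?X" using strip_path_alg[OF k x1] g0 y1 by blast
    qed
    finally show ?thesis unfolding gen_ideal_span .
  qed
  show "(\<Sum>k\<in>verts Q'. pmul Q' (delta (k, pre A k)) (strip Q A k m)) = m" if m: "m \<in> left_mod R' (pmul Q') E" for m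
    using m unfolding Lset by (intro decomp_sum) auto
  show "pmul Q' (delta (k, pre A k)) (strip Q A k m) \<in> left_mod R' (pmul Q') E"
    if k: "k \<in> verts Q'" and m: "m \<in> left_mod R' (pmul Q') E" for k m
  proof -
    have eq: "pmul Q' (delta (k, pre A k)) (strip Q A k m) = (\<lambda>p. if fst p = k \<and> (\<exists>zs'. snd p = pre A k @ zs') then m p else 0)"
      unfolding rho_pmul[OF k] by (auto simp: fun_eq_iff)
    show ?thesis using m unfolding Lset eq by (auto intro: path_alg_restrict split: if_splits)
  qed
  show "strip Q A k (pmul Q' m c) = pmul Q' (strip Q A k m) c"
    if k: "k \<in> verts Q'" and "m \<in> left_mod R' (pmul Q') E" and c: "c \<in> corner R' (pmul Q') E" for k m c
    using c unfolding Cset by (intro strip_mul_start[OF k]) auto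
  show "strip Q A k (pmul Q' m n) = pmul Q' (strip Q A k m) n"
    if k: "k \<in> verts Q'" and "m \<in> left_mod R' (pmul Q') E" and n: "n \<in> right_mod R' (pmul Q') E" for k m n
    using n unfolding Nset by (intro strip_mul_start[OF k]) auto
  show "strip Q A k (pmul Q' m n) \<in> right_mod R' (pmul Q') E"
    if k: "k \<in> verts Q'" and m: "m \<in> left_mod R' (pmul Q') E" and n: "n \<in> right_mod R' (pmul Q') E" for k m n
  proof -
    have "pmul Q' m n \<in> R'" using m n unfolding Lset Nset by (intro path_alg_pmul[OF wf]) auto
    then have "strip Q A k (pmul Q' m n) \<in> R'" by (rule strip_path_alg[OF k])
    moreover have "fst p \<in> V" if "strip Q A k (pmul Q' m n) p \<noteq> 0" for p
      using that strip_start[of k "pmul Q' m n" "fst p" "snd p"] K_props(3)[OF fq A1 k] by auto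
    ultimately show ?thesis unfolding Nset by auto
  qed
qed

end



context sctx begin

lemma pmul_mid:
  assumes f: "\<And>p. f p \<noteq> 0 \<Longrightarrow> path_end Q' p \<in> V"
  shows "pmul Q' f (pmul Q' E g) = pmul Q' f g"
proof (rule ext)
  fix p :: "('v + 'a \<times> nat) \<times> ('a \<times> nat) list"
  obtain v zs where p: "p = (v, zs)" by (cases p)
  show "pmul Q' f (pmul Q' E g) p = pmul Q' f g p"
    unfolding p pmul_def[of _ f] prod.case
  proof (intro sum.cong refl)
    fix i assume "i \<in> {..length zs}"
    show "f (v, take i zs) * pmul Q' E g (path_end Q' (v, take i zs), drop i zs) =
          f (v, take i zs) * g (path_end Q' (v, take i zs), drop i zs)"
      using f[of "(v, take i zs)"] by (cases "f (v, take i zs) = 0") (auto simp: pmul_EV_left)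
  qed
qed

lemma part1a:
  fixes Gs :: "(('v + 'a \<times> nat) \<times> ('a \<times> nat) list \<Rightarrow> 'k::field) set"
  shows "\<forall>y \<in> lspan {pmul Q' (pmul Q' x E) x' | x x'. x \<in> R' \<and> x' \<in> R'}.
     \<exists>z \<in> lspan (tens_gens (bar_mods R' (pmul Q') E 0)). (\<lambda>p. mu_map (pmul Q') z p - y p) \<in> gen_ideal Q' Gs"
proof
  fix y :: "('v + 'a \<times> nat) \<times> ('a \<times> nat) list \<Rightarrow> 'k"
  assume y: "y \<in> lspan {pmul Q' (pmul Q' x E) x' | x x'. x \<in> R' \<and> x' \<in> R'}"
  then obtain T r where T: "finite T" "T \<subseteq> {pmul Q' (pmul Q' x E) x' | x x'. x \<in> R' \<and> x' \<in> R'}"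
    and yy: "y = (\<Sum>a\<in>T. sc (r a) a)"
    unfolding lspan_eq fm.span_explicit by auto
  have "\<forall>a\<in>T. \<exists>xx. fst xx \<in> R' \<and> snd xx \<in> R' \<and> a = pmul Q' (pmul Q' (fst xx) E) (snd xx)"
    using T(2) by fastforce
  then obtain f where f: "\<And>a. a \<in> T \<Longrightarrow> fst (f a) \<in> R' \<and> snd (f a) \<in> R' \<and> a = pmul Q' (pmul Q' (fst (f a)) E) (snd (f a))"
    using bchoice by metis
  define t :: "(('v + 'a \<times> nat) \<times> ('a \<times> nat) list \<Rightarrow> 'k) \<Rightarrow> (('v + 'a \<times> nat) \<times> ('a \<times> nat) list \<Rightarrow> 'k) list"
    where "t a = [pmul Q' (fst (f a)) E, pmul Q' E (snd (f a))]" for a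
  define z :: "(('v + 'a \<times> nat) \<times> ('a \<times> nat) list \<Rightarrow> 'k) list \<Rightarrow> 'k"
    where "z = (\<Sum>a\<in>T. sc (r a) (delta (t a)))"
  have tL: "t a \<in> listset [left_mod R' (pmul Q') E, right_mod R' (pmul Q') E]" if "a \<in> T" for a
    using f[OF that] unfolding t_def left_mod_def right_mod_def by (auto simp: set_Cons_def)
  have bm0: "bar_mods R' (pmul Q') E 0 = [left_mod R' (pmul Q') E, right_mod R' (pmul Q') E]"
    by (simp add: bar_mods_def)
  have zin: "z \<in> lspan (tens_gens (bar_mods R' (pmul Q') E 0))"
    unfolding lspan_eq tens_gens_def bm0 z_def
  proof (intro fm.span_sum fm.span_scale fm.span_base imageI)
    fix a assume "a \<in> T" then show "t a \<in> listset [left_mod R' (pmul Q') E, right_mod R' (pmul Q') E]" by (rule tL)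
  qed
  have "mu_map (pmul Q') z = (\<Sum>a\<in>T. sc (r a) (pmul Q' (t a ! 0) (t a ! 1)))"
    unfolding mu_map_ext z_def by (subst ext_sum) (auto simp: fsupp_sc fsupp_delta ext_sc ext_delta)
  also have "\<dots> = y" unfolding yy
  proof (intro sum.cong refl arg_cong[where f="sc _"])
    fix a assume a: "a \<in> T"
    have "pmul Q' (t a ! 0) (t a ! 1) = pmul Q' (pmul Q' (fst (f a)) E) (pmul Q' E (snd (f a)))" by (simp add: t_def)
    also have "\<dots> = pmul Q' (pmul Q' (fst (f a)) E) (snd (f a))"
      by (rule pmul_mid) (auto simp: pmul_EV_right_fun split: if_splits)
    also have "\<dots> = a" using f[OF a] by simp
    finally show "pmul Q' (t a ! 0) (t a ! 1) = a" .
  qed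
  finally have "(\<lambda>p. mu_map (pmul Q') z p - y p) = 0" by (simp add: fun_eq_iff)
  then have "(\<lambda>p. mu_map (pmul Q') z p - y p) \<in> gen_ideal Q' Gs"
    by (simp add: gen_ideal_span fm.span_zero)
  then show "\<exists>z \<in> lspan (tens_gens (bar_mods R' (pmul Q') E 0)). (\<lambda>p. mu_map (pmul Q') z p - y p) \<in> gen_ideal Q' Gs"
    using zin by blast
qed

end

theorem theorem2p2:
  fixes Q :: "('v, 'a) quiver"
    and G :: "('v \<times> 'a list \<Rightarrow> 'k::field) set"
    and A :: nat
  assumes "finite_quiver Q"
    and "finite G"
    and "G \<subseteq> path_alg Q"
    and "\<forall>g\<in>G. uniform Q g"
    and "admissible Q (gen_ideal Q G)"
    and "\<forall>G'. G' \<subset> G \<longrightarrow> gen_ideal Q G' \<noteq> gen_ideal Q G"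
    and "A \<ge> 1"
  shows "stratifying (path_alg (stretch_quiver A Q)) (pmul (stretch_quiver A Q))
           (gen_ideal (stretch_quiver A Q) (theta A ` G))
           (\<lambda>p. \<Sum>v\<in>verts Q. vtx (Inl v) p)"
proof -
  interpret sctx Q A using assms(1,7) by unfold_locales
  interpret st: strat_setup "path_alg (stretch_quiver A Q)" "pmul (stretch_quiver A Q)" "EV (Inl ` verts Q)"
    "gen_ideal (stretch_quiver A Q) (theta A ` G)" "verts (stretch_quiver A Q)" "\<lambda>k. delta (k, pre A k)" "strip Q A"
    by (rule setup_ok[OF assms(3)])
  show ?thesis unfolding E_eq stratifying_def using part1a st.part1b st.part2 by blast
qed


end
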